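(* For each $j\in\{1,2,3\}$ there exists $K_j\in\mathbb{N}$ such that for all $k\ge K_j$, $$C(k)B(k)<e^\gamma D(k),$$ where $$B(k)=\prod_{\substack{1\le\ell\le k+1\\ \ell\ne j}}\frac{p_\ell^2}{p_\ell^2-1},$$ $$C(k)=\log\big((k+1)(\log(k+1)+\log\log(k+1))\big)\exp\!\left(c_1-\frac1{p_j}+\frac{5}{\log\big((k+1)(\log(k+1)+\log\log(k+1)-1)\big)}\right),$$ $$D(k)=\log\Big((k+1)\big(\log(k+1)+\log\log(k+1)-1\big)\log(2.51)-\log(p_j)\Big).$$ Consequently, for $k\ge\max(K_j,99)$ and $m=p_1\cdots p_{k+1}/p_j$, one has $C(k)B(k)<e^\gamma\log(\log m)$.
   Context: $p_1=2<p_2=3<\cdots$ is the increasing enumeration of the primes; $\gamma$ is the Euler–Mascheroni constant; $c_1\approx0.261497$ is the Meissel–Mertens constant, $c_1=\lim_{x\to\infty}\big(\sum_{p\le x}1/p-\log\log x\big)$. *)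

theory Defs
  imports "HOL-Analysis.Analysis" "HOL-Computational_Algebra.Primes" "HOL-Library.Infinite_Set"
begin

text \<open>The l-th prime, indexed from 1: pr 1 = 2, pr 2 = 3, ... (pr 0 is not used).\<close>
definition pr :: "nat \<Rightarrow> nat" where
  "pr l = enumerate {p. prime p} (l - 1)"

definition mertens_c1 :: real where
  "mertens_c1 = Lim at_top (\<lambda>x::real. (\<Sum>p\<in>{p::nat. prime p \<and> real p \<le> x}. 1 / real p) - ln (ln x))"

definition Bk :: "nat \<Rightarrow> nat \<Rightarrow> real" where
  "Bk j k = (\<Prod>l\<in>{1..k+1} - {j}. (real (pr l))^2 / ((real (pr l))^2 - 1))"

definition Ck :: "nat \<Rightarrow> nat \<Rightarrow> real" where
  "Ck j k = ln (real (k+1) * (ln (real (k+1)) + ln (ln (real (k+1)))))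
     * exp (mertens_c1 - 1 / real (pr j)
            + 5 / ln (real (k+1) * (ln (real (k+1)) + ln (ln (real (k+1))) - 1)))"

definition Dk :: "nat \<Rightarrow> nat \<Rightarrow> real" where
  "Dk j k = ln (real (k+1) * (ln (real (k+1)) + ln (ln (real (k+1))) - 1) * ln (2.51)
               - ln (real (pr j)))"

end

theory Submission
  imports Defs "HOL-Number_Theory.Number_Theory" "HOL-Real_Asymp.Real_Asymp" "HOL-Library.Discrete_Functions"
begin

definition Lam :: "nat \<Rightarrow> real" where "Lam n = mangoldt n"

lemma Lam_nonneg: "Lam n \<ge> 0" by (simp add: Lam_def mangoldt_nonneg)

lemma Suc_div_split:
  assumes "d > 0"
  shows "Suc n div d = n div d + (if d dvd Suc n then 1 else 0)"
  using assms div_Suc dvd_eq_mod_eq_0 plus_1_eq_Suc by fastforce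

lemma div_double_eq1: "(n::nat) < d \<Longrightarrow> d \<le> 2*n \<Longrightarrow> (2*n) div d = 1"
proof -
  assume a: "n < d" "d \<le> 2*n"
  have "(2*n) div d < 2" using a by (simp add: div_less_iff_less_mult)
  moreover have "(2*n) div d > 0" using a by (simp add: div_greater_zero_iff)
  ultimately show ?thesis by simp
qed

lemma div_double_ge: "(d::nat) > 0 \<Longrightarrow> 2*(n div d) \<le> (2*n) div d"
proof -
  assume d: "d > 0"
  have "(2*(n div d)) * d \<le> 2*n" using div_times_less_eq_dividend[of n d] by simp
  then have "(2*(n div d) * d) div d \<le> (2*n) div d" by (rule div_le_mono)
  then show ?thesis using d by simp
qed

lemma sum_divisors_swap:
  fixes f :: "nat \<Rightarrow> real"
  shows "(\<Sum>m\<in>{1..n}. \<Sum>d | d dvd m. f d) = (\<Sum>d\<in>{1..n}. f d * real (n div d))"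
proof (induction n)
  case 0 then show ?case by simp
next
  case (Suc n)
  have fin: "finite {d. d dvd Suc n}" by simp
  have "(\<Sum>m\<in>{1..Suc n}. \<Sum>d | d dvd m. f d) = (\<Sum>m\<in>{1..n}. \<Sum>d | d dvd m. f d) + (\<Sum>d | d dvd Suc n. f d)"
    by simp
  also have "(\<Sum>d | d dvd Suc n. f d) = (\<Sum>d\<in>{1..Suc n}. if d dvd Suc n then f d else 0)"
  proof -
    have eq: "{d. d dvd Suc n} = {d\<in>{1..Suc n}. d dvd Suc n}"
      by (auto simp: dvd_imp_le Suc_le_eq) (metis gr0I dvd_0_left_iff Zero_not_Suc)
    show ?thesis unfolding eq by (rule sum.inter_filter) simp
  qed
  also have "(\<Sum>m\<in>{1..n}. \<Sum>d | d dvd m. f d) = (\<Sum>d\<in>{1..Suc n}. f d * real (n div d))"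
    using Suc by simp
  finally have "(\<Sum>m\<in>{1..Suc n}. \<Sum>d | d dvd m. f d) =
     (\<Sum>d\<in>{1..Suc n}. f d * real (n div d) + (if d dvd Suc n then f d else 0))"
    by (simp add: sum.distrib)
  also have "\<dots> = (\<Sum>d\<in>{1..Suc n}. f d * real (Suc n div d))"
    by (rule sum.cong) (auto simp: Suc_div_split algebra_simps)
  finally show ?case .
qed

definition LF :: "nat \<Rightarrow> real" where "LF n = (\<Sum>m\<in>{1..n}. ln (real m))"

lemma LF_mangoldt: "LF n = (\<Sum>d\<in>{1..n}. Lam d * real (n div d))"
proof -
  have "LF n = (\<Sum>m\<in>{1..n}. \<Sum>d | d dvd m. Lam d)"
    unfolding LF_def Lam_def by (rule sum.cong) (auto simp: mangoldt_sum)
  then show ?thesis using sum_divisors_swap[where f=Lam and n=n] by simp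
qed

lemma LF_fact: "LF n = ln (fact n)"
proof -
  have "ln (fact n :: real) = ln (\<Prod>m\<in>{1..n}. real m)" by (simp add: fact_prod)
  also have "\<dots> = (\<Sum>m\<in>{1..n}. ln (real m))" by (subst ln_prod) auto
  finally show ?thesis by (simp add: LF_def)
qed

lemma LF_upper: "LF n \<le> real n * ln (real n)"
proof -
  have "LF n \<le> (\<Sum>m\<in>{1..n}. ln (real n))"
    unfolding LF_def by (rule sum_mono) auto
  then show ?thesis by simp
qed

lemma LF_lower: "LF n \<ge> real n * ln (real n) - real n"
proof (induction n)
  case 0 then show ?case by (simp add: LF_def)
next
  case (Suc n)
  have LS: "LF (Suc n) = LF n + ln (real (Suc n))" by (simp add: LF_def)
  show ?case
  proof (cases "n = 0")
    case True then show ?thesis by (simp add: LF_def)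
  next
    case False
    then have np: "real n > 0" by simp
    have "ln (real (Suc n)) - ln (real n) = ln (1 + 1 / real n)"
      using np by (simp add: ln_div field_simps)
    also have "\<dots> \<le> 1 / real n" using np by (intro ln_add_one_self_le_self) simp
    finally have "real n * (ln (real (Suc n)) - ln (real n)) \<le> 1"
      using np by (simp add: field_simps)
    then show ?thesis using Suc LS by (simp add: algebra_simps)
  qed
qed

definition psi :: "nat \<Rightarrow> real" where "psi n = (\<Sum>d\<in>{1..n}. Lam d)"

lemma psi_mono: "m \<le> n \<Longrightarrow> psi m \<le> psi n"
  unfolding psi_def by (rule sum_mono2) (auto simp: Lam_nonneg)

lemma LF_central: "LF (2*n) - 2 * LF n \<le> 2 * real n * ln 2"
proof -
  have "fact (2*n) = real ((2*n) choose n) * fact n * fact n"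
  proof -
    have "fact n * fact n * ((2*n) choose n) = (fact (2*n) :: nat)"
      using binomial_fact_lemma[of n "2*n"] by (simp add: mult_2)
    then have "real (fact n * fact n * ((2*n) choose n)) = real (fact (2*n))" by simp
    then show ?thesis by (simp only: of_nat_mult of_nat_fact) (simp add: algebra_simps)
  qed
  then have "LF (2*n) = ln (real ((2*n) choose n)) + 2 * LF n"
    by (simp add: LF_fact ln_mult binomial_eq_0_iff)
  moreover have "ln (real ((2*n) choose n)) \<le> ln (2 ^ (2*n))"
    using binomial_le_pow2[of "2*n" n]
  proof -
    have "real ((2*n) choose n) \<le> real (2 ^ (2*n))"
      using binomial_le_pow2[of "2*n" n] by (simp only: of_nat_le_iff)
    then show ?thesis by (subst ln_le_cancel_iff) auto
  qed
  moreover have "ln ((2::real) ^ (2*n)) = 2 * real n * ln 2" by (simp add: ln_realpow)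
  ultimately show ?thesis by simp
qed

lemma psi_double: "psi (2*n) - psi n \<le> 2 * real n * ln 2"
proof -
  have "psi (2*n) - psi n = (\<Sum>d\<in>{n<..2*n}. Lam d)"
  proof -
    have "{1..2*n} = {1..n} \<union> {n<..2*n}" by auto
    then have "psi (2*n) = psi n + (\<Sum>d\<in>{n<..2*n}. Lam d)"
      unfolding psi_def by (subst sum.union_disjoint[symmetric]) auto
    then show ?thesis by simp
  qed
  also have "\<dots> \<le> (\<Sum>d\<in>{1..2*n}. Lam d * (real ((2*n) div d) - 2 * real (n div d)))"
  proof -
    have "(\<Sum>d\<in>{n<..2*n}. Lam d) = (\<Sum>d\<in>{n<..2*n}. Lam d * (real ((2*n) div d) - 2 * real (n div d)))"
    proof (rule sum.cong)
      fix d assume d: "d \<in> {n<..2*n}"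
      then have "n div d = 0" by simp
      moreover have "(2*n) div d = 1" using d by (intro div_double_eq1) auto
      ultimately show "Lam d = Lam d * (real ((2*n) div d) - 2 * real (n div d))" by simp
    qed simp
    also have "\<dots> \<le> (\<Sum>d\<in>{1..2*n}. Lam d * (real ((2*n) div d) - 2 * real (n div d)))"
    proof (rule sum_mono2)
      show "{n<..2*n} \<subseteq> {1..2*n}" by auto
      fix d assume "d \<in> {1..2*n} - {n<..2*n}"
      have "2 * (n div d) \<le> (2*n) div d" using \<open>d \<in> {1..2*n} - {n<..2*n}\<close>
        by (intro div_double_ge) auto
      then have "2 * real (n div d) \<le> real ((2*n) div d)"
        by (metis of_nat_le_iff of_nat_mult of_nat_numeral)
      then show "0 \<le> Lam d * (real ((2*n) div d) - 2 * real (n div d))"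
        by (simp add: Lam_nonneg)
    qed simp
    finally show ?thesis .
  qed
  also have "\<dots> = LF (2*n) - 2 * LF n"
  proof -
    have "LF n = (\<Sum>d\<in>{1..2*n}. Lam d * real (n div d))"
      unfolding LF_mangoldt by (rule sum.mono_neutral_left) auto
    then show ?thesis
      by (simp add: LF_mangoldt sum_subtractf sum_distrib_left algebra_simps)
  qed
  also have "\<dots> \<le> 2 * real n * ln 2" by (rule LF_central)
  finally show ?thesis .
qed

lemma psi_bound: "psi n \<le> 4 * ln 2 * real n"
proof (induction n rule: less_induct)
  case (less n)
  have l2: "ln (2::real) > 0" by simp
  show ?case
  proof (cases "n \<le> 1")
    case True
    then have "n = 0 \<or> n = 1" by auto
    then show ?thesis by (auto simp: psi_def Lam_def)
  next
    case False
    show ?thesis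
    proof (cases "even n")
      case True
      then obtain k where k: "n = 2*k" by auto
      with False have "k < n" "k \<ge> 1" by auto
      have "psi n \<le> psi k + 2 * real k * ln 2" using psi_double[of k] k by simp
      also have "\<dots> \<le> 4 * ln 2 * real k + 2 * real k * ln 2" using less.IH[of k] \<open>k < n\<close> by (simp add: algebra_simps)
      also have "\<dots> \<le> 4 * ln 2 * real n" using k l2 by simp
      finally show ?thesis .
    next
      case odd: False
      then obtain k where k: "n = 2*k+1" using oddE by blast
      with False have "k \<ge> 1" by auto
      have "k + 1 < n" using k \<open>k\<ge>1\<close> by simp
      have "psi n \<le> psi (2*(k+1))" using k by (intro psi_mono) simp
      also have "\<dots> \<le> psi (k+1) + 2 * real (k+1) * ln 2" using psi_double[of "k+1"] by simp
      also have "\<dots> \<le> 4 * ln 2 * real (k+1) + 2 * real (k+1) * ln 2" using less.IH[of "k+1"] \<open>k+1 < n\<close> by (simp add: algebra_simps)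
      also have "\<dots> \<le> 4 * ln 2 * real n" using k l2 \<open>k\<ge>1\<close> by (simp add: algebra_simps)
      finally show ?thesis .
    qed
  qed
qed

definition Amert :: "nat \<Rightarrow> real" where "Amert n = (\<Sum>d\<in>{1..n}. Lam d / real d)"

lemma Amert_bounds: "\<bar>Amert n - ln (real n)\<bar> \<le> 4"
proof (cases "n = 0")
  case True then show ?thesis by (simp add: Amert_def)
next
  case False
  then have np: "real n > 0" by simp
  have up: "LF n \<le> real n * Amert n"
    unfolding LF_mangoldt Amert_def sum_distrib_left
  proof (rule sum_mono)
    fix d assume d: "d \<in> {1..n}"
    have "real (n div d) \<le> real n / real d"
    proof -
      have e: "real (d * (n div d) + n mod d) = real n" by (simp only: mult_div_mod_eq)
      have "real n = real d * real (n div d) + real (n mod d)"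
        using e by (simp only: of_nat_add of_nat_mult)
      then show ?thesis using d by (simp add: field_simps)
    qed
    then have "Lam d * real (n div d) \<le> Lam d * (real n / real d)"
      by (rule mult_left_mono) (rule Lam_nonneg)
    then show "Lam d * real (n div d) \<le> real n * (Lam d / real d)"
      by (simp add: mult.commute)
  qed
  have lo: "real n * Amert n - psi n \<le> LF n"
    unfolding LF_mangoldt Amert_def psi_def sum_distrib_left sum_subtractf[symmetric]
  proof (rule sum_mono)
    fix d assume d: "d \<in> {1..n}"
    have "real n / real d - 1 \<le> real (n div d)" using d
    proof -
      have e: "real (d * (n div d) + n mod d) = real n" by (simp only: mult_div_mod_eq)
      have "real n = real d * real (n div d) + real (n mod d)"
        using e by (simp only: of_nat_add of_nat_mult)
      moreover have "real (n mod d) < real d" using d by simp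
      ultimately show ?thesis using d by (simp add: field_simps)
    qed
    then show "real n * (Lam d / real d) - Lam d \<le> Lam d * real (n div d)"
      using Lam_nonneg[of d] mult_left_mono[of "real n / real d - 1" "real (n div d)" "Lam d"]
      by (simp add: algebra_simps)
  qed
  have "real n * (ln (real n) - 1) \<le> real n * Amert n"
    using up LF_lower[of n] by (simp add: algebra_simps)
  then have a1: "ln (real n) - 1 \<le> Amert n" using np by simp
  have "real n * Amert n \<le> real n * (ln (real n) + 4 * ln 2)"
    using lo LF_upper[of n] psi_bound[of n] by (simp add: algebra_simps)
  then have a2: "Amert n \<le> ln (real n) + 4 * ln 2" using np by simp
  have "4 * ln (2::real) \<le> 4" using ln_2_less_1 by linarith
  then show ?thesis using a1 a2 by linarith
qed

definition fl :: "nat \<Rightarrow> real" where "fl n = 1 / ln (real n)"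
definition Gm :: "nat \<Rightarrow> real" where "Gm N = (\<Sum>d\<in>{..N}. Lam d / (real d * ln (real d)))"
definition Rm :: "nat \<Rightarrow> real" where "Rm n = Amert n - ln (real n)"

lemma Rm_bound: "\<bar>Rm n\<bar> \<le> 4" unfolding Rm_def by (rule Amert_bounds)

lemma Amert_Suc: "Amert (Suc N) = Amert N + Lam (Suc N) / real (Suc N)"
  unfolding Amert_def by (simp add: add.commute)

lemma Gm_Suc: "Gm (Suc N) = Gm N + Lam (Suc N) / (real (Suc N) * ln (real (Suc N)))"
  unfolding Gm_def by simp

lemma abel: "Gm N = Amert N * fl N + (\<Sum>d<N. Amert d * (fl d - fl (Suc d)))"
proof (induction N)
  case 0 then show ?case by (simp add: Gm_def Amert_def Lam_def)
next
  case (Suc N)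
  have "Lam (Suc N) / (real (Suc N) * ln (real (Suc N))) = Lam (Suc N) / real (Suc N) * fl (Suc N)"
    unfolding fl_def by simp
  then show ?case using Suc by (simp add: Gm_Suc Amert_Suc algebra_simps)
qed

lemma telescope_from2:
  fixes g :: "nat \<Rightarrow> real"
  assumes "N \<ge> 2"
  shows "(\<Sum>d<N. if 2 \<le> d then g (Suc d) - g d else 0) = g N - g 2"
  using assms
proof (induction N rule: dec_induct)
  case base
  have "(\<Sum>d<2. if 2 \<le> d then g (Suc d) - g d else 0) = 0" by (simp add: lessThan_nat_numeral)
  then show ?case by simp
next
  case (step n) then show ?case by simp
qed

definition ee :: "nat \<Rightarrow> real" where
  "ee d = ln (real d) * (fl d - fl (Suc d)) - (if 2 \<le> d then ln (ln (real (Suc d))) - ln (ln (real d)) else 0)"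

lemma Gm_decomp:
  assumes "N \<ge> 2"
  shows "Gm N - ln (ln (real N)) = 1 + Rm N * fl N + (\<Sum>d<N. ee d) - ln (ln 2) + (\<Sum>d<N. Rm d * (fl d - fl (Suc d)))"
proof -
  have lnN: "ln (real N) > 0" using assms by simp
  have "Amert N * fl N = 1 + Rm N * fl N"
    using lnN unfolding Rm_def fl_def by (simp add: field_simps)
  moreover have "(\<Sum>d<N. Amert d * (fl d - fl (Suc d))) =
     (\<Sum>d<N. ln (real d) * (fl d - fl (Suc d))) + (\<Sum>d<N. Rm d * (fl d - fl (Suc d)))"
    unfolding Rm_def by (simp add: sum.distrib[symmetric] algebra_simps)
  moreover have "(\<Sum>d<N. ln (real d) * (fl d - fl (Suc d))) = (\<Sum>d<N. ee d) + (ln (ln (real N)) - ln (ln 2))"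
  proof -
    have "(\<Sum>d<N. ln (real d) * (fl d - fl (Suc d))) = (\<Sum>d<N. ee d) +
       (\<Sum>d<N. if 2 \<le> d then ln (ln (real (Suc d))) - ln (ln (real d)) else 0)"
      unfolding ee_def by (simp add: sum.distrib[symmetric])
    also have "(\<Sum>d<N. if 2 \<le> d then ln (ln (real (Suc d))) - ln (ln (real d)) else 0) = ln (ln (real N)) - ln (ln 2)"
      using telescope_from2[OF assms, of "\<lambda>d. ln (ln (real d))"] by simp
    finally show ?thesis .
  qed
  ultimately show ?thesis using abel[of N] by simp
qed

lemma ln_ge_one_minus_inv: "(x::real) > 0 \<Longrightarrow> ln x \<ge> 1 - 1 / x"
proof -
  assume x: "x > 0"
  have "ln (1/x) \<le> 1/x - 1" using ln_le_minus_one[of "1/x"] x by simp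
  then show ?thesis using x by (simp add: ln_div)
qed

lemma ee_bound:
  assumes d: "d \<ge> 2"
  shows "\<bar>ee d\<bar> \<le> (1 / (ln 2)^2) * inverse (real d ^ 2)"
proof -
  define a where "a = ln (real d)"
  define b where "b = ln (real (Suc d))"
  have l2: "ln (2::real) > 0" by simp
  have a2: "a \<ge> ln 2" unfolding a_def using d by simp
  have ab: "a < b" unfolding a_def b_def using d by simp
  have apos: "a > 0" using a2 l2 by linarith
  have bpos: "b > 0" using ab apos by linarith
  have eed: "ee d = 1 - a / b + ln (a / b)"
    using d apos bpos unfolding ee_def a_def[symmetric] b_def[symmetric] fl_def
    by (simp add: ln_div field_simps)
  have up: "ee d \<le> 0" using eed ln_le_minus_one[of "a/b"] apos bpos by simp
  have "ln (a/b) \<ge> 1 - b / a" using ln_ge_one_minus_inv[of "a/b"] apos bpos by simp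
  then have "ee d \<ge> 2 - a / b - b / a" using eed by linarith
  moreover have "2 - a / b - b / a = - ((b - a)^2 / (a * b))"
    using apos bpos by (simp add: field_simps power2_eq_square)
  ultimately have lo: "ee d \<ge> - ((b - a)^2 / (a * b))" by simp
  have ba: "b - a \<le> 1 / real d"
  proof -
    have "b - a = ln (real (Suc d) / real d)" unfolding a_def b_def using d by (simp add: ln_div)
    also have "\<dots> \<le> real (Suc d) / real d - 1" using d ln_le_minus_one[of "real (Suc d) / real d"] by simp
    also have "\<dots> = 1 / real d" using d by (simp add: field_simps)
    finally show ?thesis .
  qed
  have "(b - a)^2 \<le> (1 / real d)^2" using ba ab by (intro power_mono) auto
  moreover have "a * b \<ge> (ln 2)^2"
  proof -
    have "ln 2 * ln 2 \<le> a * b" using a2 ab l2 apos by (intro mult_mono) auto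
    then show ?thesis by (simp add: power2_eq_square)
  qed
  ultimately have "(b - a)^2 / (a * b) \<le> (1 / real d)^2 / (ln 2)^2"
    using l2 by (intro frac_le) auto
  then have "\<bar>ee d\<bar> \<le> (1 / real d)^2 / (ln 2)^2" using up lo by linarith
  then show ?thesis by (simp add: field_simps)
qed

lemma summable_ee: "summable ee"
proof (rule summable_comparison_test')
  show "summable (\<lambda>d. (1 / (ln 2)^2) * inverse (real d ^ 2))"
    by (intro summable_mult inverse_power_summable) simp
  fix n :: nat assume "n \<ge> 2"
  then show "norm (ee n) \<le> (1 / (ln 2)^2) * inverse (real n ^ 2)" using ee_bound by simp
qed

lemma fl_lim: "fl \<longlonglongrightarrow> 0"
  unfolding fl_def by real_asymp

lemma fl_mono: "2 \<le> d \<Longrightarrow> fl (Suc d) \<le> fl d"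
  unfolding fl_def by (simp add: frac_le)

lemma summable_Rfl: "summable (\<lambda>d. Rm d * (fl d - fl (Suc d)))"
proof (rule summable_comparison_test')
  show "summable (\<lambda>d. 4 * (fl d - fl (Suc d)))"
    by (intro summable_mult telescope_summable'[OF fl_lim])
  fix n :: nat assume n: "n \<ge> 2"
  have "\<bar>Rm n * (fl n - fl (Suc n))\<bar> = \<bar>Rm n\<bar> * (fl n - fl (Suc n))"
    using fl_mono[OF n] by (simp add: abs_mult)
  also have "\<dots> \<le> 4 * (fl n - fl (Suc n))"
    using Rm_bound[of n] fl_mono[OF n] by (intro mult_right_mono) auto
  finally show "norm (Rm n * (fl n - fl (Suc n))) \<le> 4 * (fl n - fl (Suc n))" by simp
qed

lemma Rfl_lim: "(\<lambda>N. Rm N * fl N) \<longlonglongrightarrow> 0"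
proof (rule tendsto_sandwich[of "\<lambda>N. - 4 * fl N" _ _ "\<lambda>N. 4 * fl N"])
  have flp: "eventually (\<lambda>N. fl N \<ge> 0) sequentially"
    using eventually_ge_at_top[of "1::nat"] by eventually_elim (simp add: fl_def)
  show "eventually (\<lambda>N. - 4 * fl N \<le> Rm N * fl N) sequentially"
    using flp
  proof eventually_elim
    case (elim N)
    have "\<bar>Rm N * fl N\<bar> \<le> 4 * fl N"
      using Rm_bound[of N] elim by (simp add: abs_mult mult_right_mono)
    then show ?case by linarith
  qed
  show "eventually (\<lambda>N. Rm N * fl N \<le> 4 * fl N) sequentially"
    using flp
  proof eventually_elim
    case (elim N)
    have "\<bar>Rm N * fl N\<bar> \<le> 4 * fl N"
      using Rm_bound[of N] elim by (simp add: abs_mult mult_right_mono)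
    then show ?case by linarith
  qed
  show "(\<lambda>N. - 4 * fl N) \<longlonglongrightarrow> 0" using tendsto_mult_right_zero[OF fl_lim, of "-4"] by simp
  show "(\<lambda>N. 4 * fl N) \<longlonglongrightarrow> 0" using tendsto_mult_right_zero[OF fl_lim, of "4"] by simp
qed

definition cG :: real where
  "cG = 1 + suminf ee - ln (ln 2) + suminf (\<lambda>d. Rm d * (fl d - fl (Suc d)))"

lemma Gm_lim: "(\<lambda>N. Gm N - ln (ln (real N))) \<longlonglongrightarrow> cG"
proof -
  have "(\<lambda>N. 1 + Rm N * fl N + (\<Sum>d<N. ee d) - ln (ln 2) + (\<Sum>d<N. Rm d * (fl d - fl (Suc d))))
        \<longlonglongrightarrow> 1 + 0 + suminf ee - ln (ln 2) + suminf (\<lambda>d. Rm d * (fl d - fl (Suc d)))"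
    by (intro tendsto_intros Rfl_lim summable_LIMSEQ summable_ee summable_Rfl)
  then have "(\<lambda>N. 1 + Rm N * fl N + (\<Sum>d<N. ee d) - ln (ln 2) + (\<Sum>d<N. Rm d * (fl d - fl (Suc d))))
        \<longlonglongrightarrow> cG" by (simp add: cG_def)
  then show ?thesis
  proof (rule Lim_transform_eventually)
    show "eventually (\<lambda>N. 1 + Rm N * fl N + (\<Sum>d<N. ee d) - ln (ln 2) + (\<Sum>d<N. Rm d * (fl d - fl (Suc d)))
       = Gm N - ln (ln (real N))) sequentially"
      using eventually_ge_at_top[of "2::nat"] by eventually_elim (simp add: Gm_decomp)
  qed
qed

definition ap :: "nat \<Rightarrow> real" where "ap d = (if prime d then 1 / real d else 0)"
definition Pm :: "nat \<Rightarrow> real" where "Pm N = (\<Sum>d\<in>{..N}. ap d)"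
definition tt :: "nat \<Rightarrow> real" where "tt d = Lam d / (real d * ln (real d)) - ap d"

lemma Gm_Pm: "Gm N - Pm N = (\<Sum>d<Suc N. tt d)"
  unfolding Gm_def Pm_def tt_def by (simp add: sum_subtractf lessThan_Suc_atMost)

lemma tt_nonneg: "tt d \<ge> 0"
proof (cases "prime d")
  case True
  then have "d \<ge> 2" by (simp add: prime_ge_2_nat)
  then have "ln (real d) > 0" by simp
  then show ?thesis using True by (simp add: tt_def ap_def Lam_def)
next
  case False
  show ?thesis
  proof (cases "d \<ge> 2")
    case True
    then have "ln (real d) > 0" by simp
    then show ?thesis using False Lam_nonneg[of d] by (simp add: tt_def ap_def)
  next
    case False
    then have "d = 0 \<or> d = 1" by auto
    then show ?thesis by (auto simp: tt_def ap_def Lam_def)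
  qed
qed

lemma tt_le: "tt d \<le> (if primepow d \<and> \<not> prime d then 1 / real d else 0)"
proof (cases "prime d")
  case True
  then have "d \<ge> 2" by (simp add: prime_ge_2_nat)
  then have "ln (real d) > 0" by simp
  then show ?thesis using True by (simp add: tt_def ap_def Lam_def)
next
  case np: False
  show ?thesis
  proof (cases "primepow d")
    case False
    then show ?thesis using np by (simp add: tt_def ap_def Lam_def mangoldt_def)
  next
    case True
    then have "d > 1" using primepow_gt_Suc_0[OF True] by simp
    then have lp: "ln (real d) > 0" by simp
    have "Lam d \<le> ln (real d)" unfolding Lam_def using \<open>d > 1\<close> by (intro mangoldt_le) simp
    then have "Lam d / (real d * ln (real d)) \<le> ln (real d) / (real d * ln (real d))"
      using lp \<open>d > 1\<close> by (intro divide_right_mono) auto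
    also have "\<dots> = 1 / real d" using lp by simp
    finally show ?thesis using np True by (simp add: tt_def ap_def)
  qed
qed

lemma geom_tail:
  fixes x :: real
  assumes "0 \<le> x" "x < 1"
  shows "(\<Sum>k\<in>{2..N}. x^k) \<le> x^2 / (1 - x)"
proof -
  have key: "(\<Sum>k\<in>{2..N}. x^k) * (1 - x) = x^2 - x^(Suc N)" if "N \<ge> 1" for N
    using that
  proof (induction N rule: dec_induct)
    case base then show ?case by (simp add: power2_eq_square)
  next
    case (step n)
    have "(\<Sum>k\<in>{2..Suc n}. x^k) = (\<Sum>k\<in>{2..n}. x^k) + x^(Suc n)"
      using step by (simp add: sum.cl_ivl_Suc)
    then have "(\<Sum>k\<in>{2..Suc n}. x^k) * (1 - x) = (\<Sum>k\<in>{2..n}. x^k) * (1 - x) + x^(Suc n) * (1 - x)"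
      by (simp add: algebra_simps)
    also have "\<dots> = x^2 - x^(Suc (Suc n))" using step by (simp add: algebra_simps)
    finally show ?case .
  qed
  have "(\<Sum>k\<in>{2..N}. x^k) * (1 - x) \<le> x^2"
  proof (cases "N \<ge> 1")
    case True
    then show ?thesis using key[OF True] assms by simp
  next
    case False
    then show ?thesis using assms by simp
  qed
  then show ?thesis using assms by (simp add: pos_le_divide_eq)
qed

lemma telescope_inv: "(\<Sum>m\<in>{2..N}. 1 / (real m * (real m - 1))) \<le> 1"
proof (cases "N \<ge> 1")
  case False then show ?thesis by simp
next
  case True
  have "(\<Sum>m\<in>{2..N}. 1 / (real m * (real m - 1))) = (\<Sum>m\<in>{Suc 1..N}. (\<lambda>k. - 1 / real k) m - (\<lambda>k. - 1 / real k) (m - 1))"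
    by (rule sum.cong) (auto simp: field_simps of_nat_diff)
  also have "\<dots> = 1 - 1 / real N" using sum_telescope''[OF True, of "\<lambda>k. - 1 / real k"] by simp
  finally show ?thesis by simp
qed

lemma pp_sum_bound: "(\<Sum>d<N. (if primepow d \<and> \<not> prime d then 1 / real d else 0)) \<le> 1"
proof -
  define S where "S = {d\<in>{..<N}. primepow d \<and> \<not> prime d}"
  define I where "I = {2..N} \<times> {2..N}"
  have "(\<Sum>d<N. (if primepow d \<and> \<not> prime d then 1 / real d else 0)) = (\<Sum>d\<in>S. 1 / real d)"
    unfolding S_def by (rule sum.inter_filter[symmetric]) simp
  also have "\<dots> \<le> (\<Sum>d\<in>(\<lambda>(m,k). m^k) ` I. 1 / real d)"
  proof (rule sum_mono2)
    show "finite ((\<lambda>(m,k). m^k) ` I)" unfolding I_def by simp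
    show "S \<subseteq> (\<lambda>(m,k). m^k) ` I"
    proof
      fix d assume "d \<in> S"
      then have dN: "d < N" and pp: "primepow d" and np: "\<not> prime d" unfolding S_def by auto
      from pp obtain p k where pk: "prime p" "k > 0" "d = p ^ k" unfolding primepow_def by auto
      have "k \<noteq> 1" using pk np by auto
      then have k2: "k \<ge> 2" using pk by simp
      have p2: "p \<ge> 2" using pk by (simp add: prime_ge_2_nat)
      have "p \<le> p ^ k" using pk p2 by (simp add: self_le_power)
      then have "p \<le> N" using dN pk by simp
      have "k < 2 ^ k" by (rule less_exp)
      also have "2 ^ k \<le> p ^ k" using p2 by (simp add: power_mono)
      finally have "k \<le> N" using dN pk by simp
      show "d \<in> (\<lambda>(m,k). m^k) ` I"
        unfolding I_def using pk k2 p2 \<open>p \<le> N\<close> \<open>k \<le> N\<close> by (intro image_eqI[of _ _ "(p,k)"]) auto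
    qed
  qed simp
  also have "\<dots> \<le> (\<Sum>(m,k)\<in>I. 1 / real (m^k))"
    using sum_image_le[of I "\<lambda>d. 1 / real d" "\<lambda>(m,k). m^k"] unfolding I_def
    by (simp add: case_prod_unfold comp_def)
  also have "\<dots> = (\<Sum>m\<in>{2..N}. \<Sum>k\<in>{2..N}. (1 / real m)^k)"
    unfolding I_def by (simp add: sum.cartesian_product power_one_over)
  also have "\<dots> \<le> (\<Sum>m\<in>{2..N}. 1 / (real m * (real m - 1)))"
  proof (rule sum_mono)
    fix m assume m: "m \<in> {2..N}"
    have "(\<Sum>k\<in>{2..N}. (1 / real m)^k) \<le> (1 / real m)^2 / (1 - 1 / real m)"
      using m by (intro geom_tail) auto
    also have "\<dots> = 1 / (real m * (real m - 1))" using m by (simp add: field_simps power2_eq_square)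
    finally show "(\<Sum>k\<in>{2..N}. (1 / real m)^k) \<le> 1 / (real m * (real m - 1))" .
  qed
  also have "\<dots> \<le> 1" by (rule telescope_inv)
  finally show ?thesis .
qed

lemma summable_tt: "summable tt"
proof (rule summableI_nonneg_bounded)
  show "0 \<le> tt n" for n by (rule tt_nonneg)
  fix n
  have "(\<Sum>i<n. tt i) \<le> (\<Sum>d<n. (if primepow d \<and> \<not> prime d then 1 / real d else 0))"
    by (rule sum_mono) (rule tt_le)
  also have "\<dots> \<le> 1" by (rule pp_sum_bound)
  finally show "(\<Sum>i<n. tt i) \<le> 1" .
qed

definition c1v :: real where "c1v = cG - suminf tt"

lemma Pm_lim: "(\<lambda>N. Pm N - ln (ln (real N))) \<longlonglongrightarrow> c1v"
proof -
  have t: "(\<lambda>N. \<Sum>d<Suc N. tt d) \<longlonglongrightarrow> suminf tt"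
    using summable_LIMSEQ[OF summable_tt] by (rule LIMSEQ_Suc)
  have "(\<lambda>N. (Gm N - ln (ln (real N))) - (\<Sum>d<Suc N. tt d)) \<longlonglongrightarrow> cG - suminf tt"
    by (intro tendsto_diff Gm_lim t)
  moreover have "(\<lambda>N. (Gm N - ln (ln (real N))) - (\<Sum>d<Suc N. tt d)) = (\<lambda>N. Pm N - ln (ln (real N)))"
    using Gm_Pm by (auto simp: algebra_simps fun_eq_iff)
  ultimately show ?thesis by (simp add: c1v_def)
qed

lemma prime_sum_real:
  assumes "x \<ge> 0"
  shows "(\<Sum>p\<in>{p::nat. prime p \<and> real p \<le> x}. 1 / real p) = Pm (nat \<lfloor>x\<rfloor>)"
proof -
  have eq: "{p::nat. prime p \<and> real p \<le> x} = {d\<in>{..nat \<lfloor>x\<rfloor>}. prime d}"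
  proof -
    have h: "real n \<le> x \<longleftrightarrow> n \<le> nat \<lfloor>x\<rfloor>" for n :: nat
      using assms by (simp add: le_nat_iff le_floor_iff)
    show ?thesis using h by auto
  qed
  show ?thesis unfolding eq Pm_def ap_def by (rule sum.inter_filter) simp
qed

lemma mertens_lim:
  "((\<lambda>x::real. (\<Sum>p\<in>{p::nat. prime p \<and> real p \<le> x}. 1 / real p) - ln (ln x)) \<longlongrightarrow> c1v) at_top"
proof -
  have fl: "filterlim (\<lambda>x::real. nat \<lfloor>x\<rfloor>) sequentially at_top"
    by (rule filterlim_compose[OF filterlim_nat_sequentially filterlim_floor_sequentially])
  have A: "((\<lambda>x::real. Pm (nat \<lfloor>x\<rfloor>) - ln (ln (real (nat \<lfloor>x\<rfloor>)))) \<longlongrightarrow> c1v) at_top"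
    using filterlim_compose[OF Pm_lim fl] by (simp add: comp_def)
  have B: "((\<lambda>x::real. ln (ln x) - ln (ln (real (nat \<lfloor>x\<rfloor>)))) \<longlongrightarrow> 0) at_top"
  proof (rule tendsto_sandwich[of "\<lambda>_. 0" _ _ "\<lambda>x. ln (ln x) - ln (ln (x - 1))"])
    have ev: "eventually (\<lambda>x::real. x - 1 \<le> real (nat \<lfloor>x\<rfloor>) \<and> real (nat \<lfloor>x\<rfloor>) \<le> x \<and> x \<ge> 3) at_top"
      using eventually_ge_at_top[of "3::real"]
    proof eventually_elim
      case (elim x)
      have "real (nat \<lfloor>x\<rfloor>) = real_of_int \<lfloor>x\<rfloor>" using elim by simp
      then show ?case using elim by simp
    qed
    show "eventually (\<lambda>x. 0 \<le> ln (ln x) - ln (ln (real (nat \<lfloor>x\<rfloor>)))) at_top"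
      using ev
    proof eventually_elim
      case (elim x)
      have "ln (real (nat \<lfloor>x\<rfloor>)) > 0" using elim by simp
      then show ?case using elim by simp
    qed
    show "eventually (\<lambda>x. ln (ln x) - ln (ln (real (nat \<lfloor>x\<rfloor>))) \<le> ln (ln x) - ln (ln (x - 1))) at_top"
      using ev
    proof eventually_elim
      case (elim x)
      have "ln (x - 1) > 0" using elim by simp
      moreover have "ln (x - 1) \<le> ln (real (nat \<lfloor>x\<rfloor>))" using elim by simp
      ultimately show ?case by simp
    qed
    show "((\<lambda>_. 0) \<longlongrightarrow> (0::real)) at_top" by simp
    show "((\<lambda>x::real. ln (ln x) - ln (ln (x - 1))) \<longlongrightarrow> 0) at_top" by real_asymp
  qed
  have "((\<lambda>x::real. (Pm (nat \<lfloor>x\<rfloor>) - ln (ln (real (nat \<lfloor>x\<rfloor>)))) - (ln (ln x) - ln (ln (real (nat \<lfloor>x\<rfloor>))))) \<longlongrightarrow> c1v - 0) at_top"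
    by (intro tendsto_diff A B)
  then have C: "((\<lambda>x::real. Pm (nat \<lfloor>x\<rfloor>) - ln (ln x)) \<longlongrightarrow> c1v) at_top" by simp
  show ?thesis
  proof (rule Lim_transform_eventually[OF C])
    show "eventually (\<lambda>x. Pm (nat \<lfloor>x\<rfloor>) - ln (ln x) = (\<Sum>p\<in>{p::nat. prime p \<and> real p \<le> x}. 1 / real p) - ln (ln x)) at_top"
      using eventually_ge_at_top[of "0::real"] by eventually_elim (simp add: prime_sum_real)
  qed
qed

lemma mertens_c1_eq: "mertens_c1 = c1v"
  unfolding mertens_c1_def by (rule tendsto_Lim[OF trivial_limit_at_top_linorder mertens_lim])

lemma powr_step:
  fixes n :: nat and \<delta> :: real
  assumes n: "n \<ge> 2" and d: "\<delta> > 0"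
  shows "real n powr (-(1+\<delta>)) \<le> (real (n-1) powr (-\<delta>) - real n powr (-\<delta>)) / \<delta>"
proof -
  have n0: "real n > 0" "real (n-1) > 0" using n by auto
  have rn1: "real (n-1) = real n - 1" using n by (simp add: of_nat_diff)
  have "ln (real (n-1)) - ln (real n) = ln (real (n-1) / real n)" using n0 by (simp add: ln_div)
  also have "\<dots> \<le> real (n-1) / real n - 1" using n0 by (intro ln_le_minus_one) simp
  also have "\<dots> = - 1 / real n" using n0 rn1 by (simp add: field_simps)
  finally have lnd: "ln (real (n-1)) \<le> ln (real n) - 1 / real n" by simp
  have "real (n-1) powr (-\<delta>) = exp (-\<delta> * ln (real (n-1)))" using n0 by (simp add: powr_def)
  also have "\<dots> \<ge> exp (-\<delta> * ln (real n) + \<delta> / real n)"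
  proof -
    have "\<delta> * (1 / real n + ln (real (n-1))) \<le> \<delta> * ln (real n)"
      using lnd d by (intro mult_left_mono) auto
    then show ?thesis by (simp add: algebra_simps)
  qed
  finally have A: "real (n-1) powr (-\<delta>) \<ge> exp (-\<delta> * ln (real n) + \<delta> / real n)" .
  then have "real (n-1) powr (-\<delta>) \<ge> exp (-\<delta> * ln (real n)) * exp (\<delta> / real n)"
    by (simp only: exp_add)
  moreover have "exp (\<delta> / real n) \<ge> 1 + \<delta> / real n" by (rule exp_ge_add_one_self)
  moreover have "exp (-\<delta> * ln (real n)) = real n powr (-\<delta>)" using n0 by (simp add: powr_def)
  ultimately have "real (n-1) powr (-\<delta>) \<ge> real n powr (-\<delta>) * (1 + \<delta> / real n)"
    by (smt (verit) exp_gt_zero mult_left_mono)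
  then have "real (n-1) powr (-\<delta>) - real n powr (-\<delta>) \<ge> \<delta> * (real n powr (-\<delta>) / real n)"
    by (simp add: algebra_simps)
  moreover have "real n powr (-\<delta>) / real n = real n powr (-(1+\<delta>))"
  proof -
    have m: "-(1+\<delta>) = -\<delta> + (-1)" by simp
    have e1: "real n powr (-(1+\<delta>)) = real n powr (-\<delta>) * real n powr (-1)"
      unfolding m by (rule powr_add)
    have e2: "real n powr (-1) = 1 / real n" using n0 by (simp add: powr_neg_one)
    show ?thesis by (simp only: e1 e2) simp
  qed
  ultimately show ?thesis using d by (simp add: pos_le_divide_eq mult.commute)
qed

lemma zeta_partial_bound:
  fixes \<delta> :: real
  assumes d: "\<delta> > 0"
  shows "(\<Sum>n\<in>{1..M}. real n powr (-(1+\<delta>))) \<le> 1 + 1 / \<delta>"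
proof (cases "M \<ge> 1")
  case False then show ?thesis using d by simp
next
  case True
  define F where "F = (\<lambda>k::nat. - (real k powr (-\<delta>)))"
  have "{1..M} = insert 1 {2..M}" using True by auto
  then have "(\<Sum>n\<in>{1..M}. real n powr (-(1+\<delta>))) = 1 + (\<Sum>n\<in>{2..M}. real n powr (-(1+\<delta>)))"
    by simp
  also have "(\<Sum>n\<in>{2..M}. real n powr (-(1+\<delta>))) \<le> (\<Sum>n\<in>{2..M}. (real (n-1) powr (-\<delta>) - real n powr (-\<delta>)) / \<delta>)"
    by (rule sum_mono) (use powr_step d in auto)
  also have "\<dots> = (\<Sum>n\<in>{Suc 1..M}. F n - F (n - 1)) / \<delta>"
    by (simp add: sum_divide_distrib F_def numeral_2_eq_2)
  also have "\<dots> = (1 - real M powr (-\<delta>)) / \<delta>"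
    using sum_telescope''[OF True, of F] by (simp add: F_def)
  also have "\<dots> \<le> 1 / \<delta>" using d by (simp add: divide_right_mono)
  finally show ?thesis by simp
qed

lemma euler_prod_trunc:
  fixes \<delta> :: real and Q :: "nat set"
  assumes d: "\<delta> > 0" and Q: "finite Q" "\<And>p. p \<in> Q \<Longrightarrow> prime p"
  shows "(\<Prod>p\<in>Q. \<Sum>k\<in>{..K}. (real p powr (-(1+\<delta>)))^k) \<le> 1 + 1 / \<delta>"
proof -
  define s where "s = 1 + \<delta>"
  define phi where "phi = (\<lambda>g. \<Prod>p\<in>Q. p ^ g p)"
  define P where "P = PiE Q (\<lambda>_. {..K})"
  define M where "M = (\<Prod>p\<in>Q. p ^ K)"
  have pos: "p > 0" if "p \<in> Q" for p using Q(2)[OF that] prime_gt_0_nat by blast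
  have inj: "inj_on phi P"
  proof (rule inj_onI)
    fix g h assume g: "g \<in> P" and h: "h \<in> P" and e: "phi g = phi h"
    show "g = h"
    proof (rule PiE_ext)
      show "g \<in> PiE Q (\<lambda>_. {..K})" "h \<in> PiE Q (\<lambda>_. {..K})" using g h unfolding P_def by auto
      fix q assume q: "q \<in> Q"
      have "multiplicity q (phi g) = g q"
        unfolding phi_def using multiplicity_prod_prime_powers[OF Q(1) Q(2) Q(2)[OF q], of g] q by simp
      moreover have "multiplicity q (phi h) = h q"
        unfolding phi_def using multiplicity_prod_prime_powers[OF Q(1) Q(2) Q(2)[OF q], of h] q by simp
      ultimately show "g q = h q" using e by simp
    qed
  qed

  have "(\<Prod>p\<in>Q. \<Sum>k\<in>{..K}. (real p powr (-s))^k) = (\<Sum>g\<in>P. \<Prod>p\<in>Q. (real p powr (-s))^(g p))"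
    unfolding P_def by (rule prod_sum_PiE) (auto simp: Q)
  also have "\<dots> = (\<Sum>g\<in>P. real (phi g) powr (-s))"
  proof (rule sum.cong)
    fix g assume "g \<in> P"
    have "(\<Prod>p\<in>Q. (real p powr (-s))^(g p)) = (\<Prod>p\<in>Q. (real (p ^ g p)) powr (-s))"
    proof (rule prod.cong)
      fix p assume "p \<in> Q"
      then have "real p > 0" using pos by simp
      then show "(real p powr (-s))^(g p) = real (p ^ g p) powr (-s)"
        by (simp add: powr_power powr_realpow[symmetric] powr_powr mult.commute)
    qed simp
    also have "\<dots> = real (phi g) powr (-s)"
      unfolding phi_def by (simp add: prod_powr_distrib)
    finally show "(\<Prod>p\<in>Q. (real p powr (-s))^(g p)) = real (phi g) powr (-s)" .
  qed simp
  also have "\<dots> = (\<Sum>n\<in>phi ` P. real n powr (-s))"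
    using sum.reindex[OF inj, of "\<lambda>n. real n powr (-s)"] by (simp add: comp_def)
  also have "\<dots> \<le> (\<Sum>n\<in>{1..M}. real n powr (-s))"
  proof (rule sum_mono2)
    show "phi ` P \<subseteq> {1..M}"
    proof
      fix n assume "n \<in> phi ` P"
      then obtain g where g: "g \<in> P" and n: "n = phi g" by auto
      have "phi g \<ge> 1" unfolding phi_def using pos by (intro prod_ge_1) (simp add: Suc_leI)
      moreover have "phi g \<le> M" unfolding phi_def M_def
      proof (rule prod_mono)
        fix p assume p: "p \<in> Q"
        have "g p \<le> K" using g p unfolding P_def by auto
        then show "0 \<le> p ^ g p \<and> p ^ g p \<le> p ^ K" using pos[OF p] by (simp add: power_increasing)
      qed
      ultimately show "n \<in> {1..M}" using n by simp
    qed
  qed auto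
  also have "\<dots> \<le> 1 + 1 / \<delta>" unfolding s_def by (rule zeta_partial_bound[OF d])
  finally show ?thesis unfolding s_def .
qed

lemma euler_prod_bound:
  fixes \<delta> :: real and Q :: "nat set"
  assumes d: "\<delta> > 0" and Q: "finite Q" "\<And>p. p \<in> Q \<Longrightarrow> prime p"
  shows "(\<Sum>p\<in>Q. - ln (1 - real p powr (-(1+\<delta>)))) \<le> ln (1 + 1 / \<delta>)"
proof -
  define x where "x = (\<lambda>p::nat. real p powr (-(1+\<delta>)))"
  have x01: "0 < x p \<and> x p < 1" if "p \<in> Q" for p
  proof -
    have "p \<ge> 2" using Q(2)[OF that] prime_ge_2_nat by blast
    then have "real p > 1" by simp
    then show ?thesis unfolding x_def using d by (simp add: powr_less_one)
  qed
  have lim: "(\<lambda>K. \<Prod>p\<in>Q. \<Sum>k\<in>{..K}. (x p)^k) \<longlonglongrightarrow> (\<Prod>p\<in>Q. 1 / (1 - x p))"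
  proof (intro tendsto_prod)
    fix p assume "p \<in> Q"
    then have "norm (x p) < 1" using x01[of p] by auto
    then have "(\<lambda>k. (x p)^k) sums (1 / (1 - x p))" by (rule geometric_sums)
    then have "(\<lambda>n. \<Sum>k<n. (x p)^k) \<longlonglongrightarrow> 1 / (1 - x p)" by (simp add: sums_def)
    then have "(\<lambda>K. \<Sum>k<Suc K. (x p)^k) \<longlonglongrightarrow> 1 / (1 - x p)" by (rule LIMSEQ_Suc)
    then show "(\<lambda>K. \<Sum>k\<in>{..K}. (x p)^k) \<longlonglongrightarrow> 1 / (1 - x p)" by (simp add: lessThan_Suc_atMost)
  qed
  have le: "(\<Prod>p\<in>Q. 1 / (1 - x p)) \<le> 1 + 1 / \<delta>"
    using lim by (rule LIMSEQ_le_const2) (use euler_prod_trunc[OF d Q] x_def in auto)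
  have "(\<Sum>p\<in>Q. - ln (1 - x p)) = (\<Sum>p\<in>Q. ln (1 / (1 - x p)))"
    by (rule sum.cong) (use x01 in \<open>auto simp: ln_div\<close>)
  also have "\<dots> = ln (\<Prod>p\<in>Q. 1 / (1 - x p))"
    by (rule ln_prod[symmetric]) (use x01 Q in force)+
  also have "\<dots> \<le> ln (1 + 1 / \<delta>)"
  proof -
    have pos1: "0 < 1 + 1/\<delta>" using d by (metis add_pos_pos divide_pos_pos zero_less_one)
    have pos2: "0 < (\<Prod>p\<in>Q. 1 / (1 - x p))" using x01 by (intro prod_pos) auto
    show ?thesis using le pos1 pos2 by (subst ln_le_cancel_iff) auto
  qed
  finally show ?thesis unfolding x_def .
qed

definition hp :: "nat \<Rightarrow> real \<Rightarrow> real" where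
  "hp p s = - ln (1 - real p powr (-s)) - real p powr (-s)"

definition S0 :: "nat set" where "S0 = {2,3,5,7,11,13,17,19,23}"

lemma S0_primes: "p \<in> S0 \<Longrightarrow> prime p"
proof -
  have "prime (2::nat)" "prime (3::nat)" "prime (5::nat)" "prime (7::nat)" "prime (11::nat)"
       "prime (13::nat)" "prime (17::nat)" "prime (19::nat)" "prime (23::nat)"
    by code_simp+
  then show "p \<in> S0 \<Longrightarrow> prime p" unfolding S0_def by auto
qed

lemma S0_le: "p \<in> S0 \<Longrightarrow> p \<le> 23" unfolding S0_def by auto

lemma hp_nonneg:
  assumes "prime p" "s > 0"
  shows "hp p s \<ge> 0"
proof -
  have "real p > 1" using assms prime_gt_1_nat by simp
  then have x: "0 < real p powr (-s)" "real p powr (-s) < 1" using assms by (auto simp: powr_less_one)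
  have "ln (1 - real p powr (-s)) \<le> (1 - real p powr (-s)) - 1" using x by (intro ln_le_minus_one) simp
  then show ?thesis unfolding hp_def by simp
qed

lemma ap_powr: "ap d * real d powr (-\<delta>) = (if prime d then real d powr (-(1+\<delta>)) else 0)"
proof (cases "prime d")
  case True
  then have d: "real d > 0" using prime_gt_0_nat by simp
  have m: "-(1+\<delta>) = -1 + (-\<delta>)" by simp
  have "real d powr (-(1+\<delta>)) = real d powr (-1) * real d powr (-\<delta>)" unfolding m by (rule powr_add)
  also have "real d powr (-1) = 1 / real d" using d by (simp add: powr_neg_one)
  finally show ?thesis using True by (simp add: ap_def)
qed (simp add: ap_def)

lemma prime_dirichlet_bound:
  assumes d: "\<delta> > 0" and N: "N \<ge> 23"
  shows "(\<Sum>d\<in>{..N}. ap d * real d powr (-\<delta>)) \<le> ln (1 + 1/\<delta>) - (\<Sum>p\<in>S0. hp p (1+\<delta>))"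
proof -
  define Q where "Q = {p\<in>{..N}. prime p}"
  have Qf: "finite Q" unfolding Q_def by simp
  have Qp: "\<And>p. p \<in> Q \<Longrightarrow> prime p" unfolding Q_def by simp
  have "(\<Sum>d\<in>{..N}. ap d * real d powr (-\<delta>)) = (\<Sum>p\<in>Q. real p powr (-(1+\<delta>)))"
    unfolding ap_powr Q_def by (rule sum.inter_filter[symmetric]) simp
  also have "\<dots> = (\<Sum>p\<in>Q. - ln (1 - real p powr (-(1+\<delta>)))) - (\<Sum>p\<in>Q. hp p (1+\<delta>))"
    unfolding hp_def by (simp add: sum_subtractf)
  also have "\<dots> \<le> (\<Sum>p\<in>Q. - ln (1 - real p powr (-(1+\<delta>)))) - (\<Sum>p\<in>S0. hp p (1+\<delta>))"
  proof -
    have sub: "S0 \<subseteq> Q"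
    proof
      fix p assume p: "p \<in> S0"
      have "prime p" "p \<le> 23" using S0_primes[OF p] S0_le[OF p] by auto
      then show "p \<in> Q" using N unfolding Q_def by simp
    qed
    have "(\<Sum>p\<in>S0. hp p (1+\<delta>)) \<le> (\<Sum>p\<in>Q. hp p (1+\<delta>))"
    proof (rule sum_mono2[OF Qf sub])
      fix b assume "b \<in> Q - S0"
      then have "prime b" using Qp by simp
      then show "0 \<le> hp b (1 + \<delta>)" using d by (intro hp_nonneg) auto
    qed
    then show ?thesis by simp
  qed
  also have "\<dots> \<le> ln (1 + 1/\<delta>) - (\<Sum>p\<in>S0. hp p (1+\<delta>))"
    using euler_prod_bound[OF d Qf Qp] by simp
  finally show ?thesis .
qed

lemma abel_pow:
  fixes c :: "nat \<Rightarrow> real"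
  assumes c0: "c 0 = 0"
  shows "(\<Sum>m<N. (\<Sum>d\<in>{..Suc m}. c d) * (real (Suc m) powr (-\<delta>) - real (Suc (Suc m)) powr (-\<delta>)))
       = (\<Sum>d\<in>{..N}. c d * (real d powr (-\<delta>) - real (Suc N) powr (-\<delta>)))"
proof (induction N)
  case 0 then show ?case using c0 by simp
next
  case (Suc N)
  define x where "x = (\<lambda>n::nat. real n powr (-\<delta>))"
  have "(\<Sum>d\<in>{..Suc N}. c d * (x d - x (Suc (Suc N)))) =
        (\<Sum>d\<in>{..Suc N}. c d * (x d - x (Suc N)) + c d * (x (Suc N) - x (Suc (Suc N))))"
    by (rule sum.cong) (simp_all add: algebra_simps)
  also have "\<dots> = (\<Sum>d\<in>{..Suc N}. c d * (x d - x (Suc N))) + (\<Sum>d\<in>{..Suc N}. c d) * (x (Suc N) - x (Suc (Suc N)))"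
    by (simp only: sum.distrib sum_distrib_right)
  also have "\<dots> = (\<Sum>d\<in>{..N}. c d * (x d - x (Suc N))) + (\<Sum>d\<in>{..Suc N}. c d) * (x (Suc N) - x (Suc (Suc N)))"
    by simp
  finally show ?case using Suc unfolding x_def by simp
qed

definition bq :: "nat \<Rightarrow> real" where
  "bq d = (if \<exists>k\<ge>1. d = 2^k then 1 / real (floor_log d) else 0)"
definition Bq :: "nat \<Rightarrow> real" where "Bq N = (\<Sum>d\<in>{..N}. bq d)"

lemma pow2_set:
  fixes N :: nat
  shows "{d\<in>{..N}. \<exists>k\<ge>1. d = 2^k} = (\<lambda>k. 2^k) ` {1..floor_log N}"
proof (rule subset_antisym; rule subsetI)
  fix d :: nat assume "d \<in> {d\<in>{..N}. \<exists>k\<ge>1. d = 2^k}"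
  then obtain k where k: "k \<ge> 1" "d = 2^k" "d \<le> N" by auto
  have "k \<le> floor_log N" using floor_log_le_iff[OF \<open>d \<le> N\<close>] k by simp
  then show "d \<in> (\<lambda>k. 2^k) ` {1..floor_log N}" using k by auto
next
  fix d :: nat assume "d \<in> (\<lambda>k. 2^k) ` {1..floor_log N}"
  then obtain k where k: "k \<ge> 1" "k \<le> floor_log N" "d = (2::nat)^k" by auto
  then have "N > 0" by (cases "N = 0") auto
  have "(2::nat)^k \<le> 2 ^ floor_log N" using k by (intro power_increasing) auto
  also have "\<dots> \<le> N" using floor_log_exp2_le[OF \<open>N > 0\<close>] .
  finally show "d \<in> {d\<in>{..N}. \<exists>k\<ge>1. d = 2^k}" using k by auto
qed

lemma Bq_harm: "Bq N = harm (floor_log N)"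
proof -
  have "Bq N = (\<Sum>d\<in>{d\<in>{..N}. \<exists>k\<ge>1. d = 2^k}. 1 / real (floor_log d))"
    unfolding Bq_def bq_def by (rule sum.inter_filter[symmetric]) simp
  also have "\<dots> = (\<Sum>k\<in>{1..floor_log N}. 1 / real (floor_log ((2::nat)^k)))"
    unfolding pow2_set by (rule sum.reindex_cong[where l="\<lambda>k. 2^k"]) (auto simp: inj_on_def)
  also have "\<dots> = harm (floor_log N)" unfolding harm_def by (simp add: divide_inverse)
  finally show ?thesis .
qed

lemma floor_log_filterlim: "filterlim floor_log sequentially sequentially"
proof (subst filterlim_at_top, intro allI)
  fix Z :: nat
  show "eventually (\<lambda>N. Z \<le> floor_log N) sequentially"
    using eventually_ge_at_top[of "2^Z"]
  proof eventually_elim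
    case (elim N)
    then show ?case using floor_log_le_iff[OF elim] by simp
  qed
qed

lemma Bq_lim: "(\<lambda>N. Bq N - ln (ln (real N))) \<longlonglongrightarrow> euler_mascheroni - ln (ln 2)"
proof -
  define K where "K = (\<lambda>N. floor_log N)"
  have h1: "(\<lambda>N. harm (K N) - ln (real (K N)) :: real) \<longlonglongrightarrow> euler_mascheroni"
    unfolding K_def using filterlim_compose[OF euler_mascheroni_LIMSEQ floor_log_filterlim] by (simp add: comp_def)
  have r0: "((\<lambda>k::nat. ln (real (Suc k)) - ln (real k)) \<longlongrightarrow> 0) sequentially" by real_asymp
  have h2: "(\<lambda>N. ln (real (Suc (K N))) - ln (real (K N))) \<longlonglongrightarrow> 0"
    unfolding K_def using filterlim_compose[OF r0 floor_log_filterlim] by (simp add: comp_def)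
  have g: "(\<lambda>N. ln (ln (real N)) - ln (real (K N))) \<longlonglongrightarrow> ln (ln 2)"
  proof (rule tendsto_sandwich[of "\<lambda>_. ln (ln 2)" _ _ "\<lambda>N. ln (ln 2) + (ln (real (Suc (K N))) - ln (real (K N)))"])
    have ev: "eventually (\<lambda>N. N \<ge> 2 \<and> K N \<ge> 1 \<and> real (K N) * ln 2 \<le> ln (real N) \<and> ln (real N) \<le> real (Suc (K N)) * ln 2) sequentially"
      using eventually_ge_at_top[of "2::nat"]
    proof eventually_elim
      case (elim N)
      have f2: "floor_log (2::nat) = 1" using floor_log_power[of 1] by simp
      have k1: "K N \<ge> 1" unfolding K_def using floor_log_le_iff[OF elim] f2 by simp
      have Np: "N > 0" using elim by simp
      have a: "2 ^ K N \<le> N" unfolding K_def by (rule floor_log_exp2_le[OF Np])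
      have b: "N \<le> 2 ^ Suc (K N)" unfolding K_def using floor_log_exp2_ge[of N] by simp
      have a': "(2::real) ^ K N \<le> real N" using a by (metis of_nat_le_iff of_nat_numeral of_nat_power)
      have b': "real N \<le> (2::real) ^ Suc (K N)" using b by (metis of_nat_le_iff of_nat_numeral of_nat_power)
      have "ln ((2::real) ^ K N) \<le> ln (real N)" using a' Np by (subst ln_le_cancel_iff) auto
      then have A: "real (K N) * ln 2 \<le> ln (real N)" by (simp add: ln_realpow)
      have "ln (real N) \<le> ln ((2::real) ^ Suc (K N))" using b' Np by (subst ln_le_cancel_iff) auto
      then have B: "ln (real N) \<le> real (Suc (K N)) * ln 2" by (simp only: ln_realpow)
      show ?case using elim k1 A B by simp
    qed
    show "eventually (\<lambda>N. ln (ln 2) \<le> ln (ln (real N)) - ln (real (K N))) sequentially"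
      using ev
    proof eventually_elim
      case (elim N)
      have "ln (real (K N) * ln 2) \<le> ln (ln (real N))"
        using elim by (subst ln_le_cancel_iff) auto
      then show ?case using elim by (simp add: ln_mult)
    qed
    show "eventually (\<lambda>N. ln (ln (real N)) - ln (real (K N)) \<le> ln (ln 2) + (ln (real (Suc (K N))) - ln (real (K N)))) sequentially"
      using ev
    proof eventually_elim
      case (elim N)
      have "ln (ln (real N)) \<le> ln (real (Suc (K N)) * ln 2)"
        using elim by (subst ln_le_cancel_iff) auto
      then show ?case using elim by (simp add: ln_mult)
    qed
    show "(\<lambda>_. ln (ln 2)) \<longlonglongrightarrow> ln (ln (2::real))" by simp
    show "(\<lambda>N. ln (ln 2) + (ln (real (Suc (K N))) - ln (real (K N)))) \<longlonglongrightarrow> ln (ln 2)"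
      using tendsto_add[OF tendsto_const h2, of "ln (ln 2)"] by simp
  qed
  have "(\<lambda>N. (harm (K N) - ln (real (K N))) - (ln (ln (real N)) - ln (real (K N)))) \<longlonglongrightarrow> euler_mascheroni - ln (ln 2)"
    by (intro tendsto_diff h1 g)
  then show ?thesis unfolding K_def by (simp add: Bq_harm)
qed

definition Wt :: "real \<Rightarrow> nat \<Rightarrow> real" where
  "Wt \<delta> m = real (Suc m) powr (-\<delta>) - real (Suc (Suc m)) powr (-\<delta>)"

lemma Wt_nonneg: "\<delta> > 0 \<Longrightarrow> Wt \<delta> m \<ge> 0"
  unfolding Wt_def by (simp add: powr_mono2')

lemma powr_Suc_lim: "\<delta> > 0 \<Longrightarrow> (\<lambda>m. real (Suc m) powr (-\<delta>)) \<longlonglongrightarrow> 0"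
proof -
  assume d: "\<delta> > 0"
  have "filterlim (\<lambda>m. real (Suc m)) at_top sequentially"
    by (rule filterlim_compose[OF filterlim_real_sequentially filterlim_Suc])
  then show ?thesis using d by (intro tendsto_neg_powr) auto
qed

lemma Wt_sums: "\<delta> > 0 \<Longrightarrow> Wt \<delta> sums 1"
proof -
  assume d: "\<delta> > 0"
  have "(\<lambda>m. real (Suc m) powr (-\<delta>) - real (Suc (Suc m)) powr (-\<delta>)) sums (real (Suc 0) powr (-\<delta>) - 0)"
    using telescope_sums'[OF powr_Suc_lim[OF d]] by simp
  then show ?thesis unfolding Wt_def by simp
qed

lemma Wt_partial: "(\<Sum>m<N. Wt \<delta> m) = 1 - real (Suc N) powr (-\<delta>)"
  unfolding Wt_def using sum_lessThan_telescope'[of "\<lambda>m. real (Suc m) powr (-\<delta>)" N] by simp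

lemma abelian:
  fixes E :: "nat \<Rightarrow> real"
  assumes E: "E \<longlonglongrightarrow> L"
  shows "((\<lambda>\<delta>. suminf (\<lambda>m. E m * Wt \<delta> m)) \<longlongrightarrow> L) (at_right 0)"
proof -
  obtain M where M: "M > 0" "\<And>m. \<bar>E m\<bar> \<le> M"
    using convergent_imp_Bseq[OF convergentI[OF E]] by (auto elim!: BseqE)
  define C where "C = M + \<bar>L\<bar>"
  have C: "\<bar>E m - L\<bar> \<le> C" for m using M(2)[of m] unfolding C_def by linarith
  show ?thesis
  proof (rule tendstoI)
    fix \<epsilon> :: real assume e: "\<epsilon> > 0"
    obtain N0 where N0: "\<And>m. m \<ge> N0 \<Longrightarrow> \<bar>E m - L\<bar> < \<epsilon> / 2"
      using E e unfolding LIMSEQ_iff by (metis half_gt_zero real_norm_def)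
    have lim1: "((\<lambda>\<delta>::real. C * (1 - real (Suc N0) powr (-\<delta>))) \<longlongrightarrow> C * (1 - real (Suc N0) powr (-0))) (at_right 0)"
      by (intro tendsto_intros) auto
    then have lim1': "((\<lambda>\<delta>::real. C * (1 - real (Suc N0) powr (-\<delta>))) \<longlongrightarrow> 0) (at_right 0)" by simp
    have ev1: "eventually (\<lambda>\<delta>::real. C * (1 - real (Suc N0) powr (-\<delta>)) < \<epsilon> / 2) (at_right 0)"
      by (rule order_tendstoD(2)[OF lim1']) (use e in simp)
    have ev2: "eventually (\<lambda>\<delta>::real. 0 < \<delta>) (at_right 0)" by (rule eventually_at_right_less)
    show "eventually (\<lambda>\<delta>. dist (suminf (\<lambda>m. E m * Wt \<delta> m)) L < \<epsilon>) (at_right 0)"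
      using ev1 ev2
    proof eventually_elim
      case (elim \<delta>)
      have d: "\<delta> > 0" using elim by simp
      have W0: "\<And>m. Wt \<delta> m \<ge> 0" using Wt_nonneg[OF d] .
      have sW: "summable (Wt \<delta>)" using Wt_sums[OF d] by (rule sums_summable)
      have sumW: "suminf (Wt \<delta>) = 1" using Wt_sums[OF d] by (rule sums_unique[symmetric])
      have sEW: "summable (\<lambda>m. E m * Wt \<delta> m)"
      proof (rule summable_comparison_test')
        show "summable (\<lambda>m. M * Wt \<delta> m)" using sW by (rule summable_mult)
        fix m :: nat
        show "norm (E m * Wt \<delta> m) \<le> M * Wt \<delta> m"
          using M(2)[of m] W0[of m] by (simp add: abs_mult mult_right_mono)
      qed
      have sLW: "summable (\<lambda>m. L * Wt \<delta> m)" using sW by (rule summable_mult)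
      have sumLW: "suminf (\<lambda>m. L * Wt \<delta> m) = L" using suminf_mult[OF sW, of L] sumW by simp
      have eq: "suminf (\<lambda>m. E m * Wt \<delta> m) - L = suminf (\<lambda>m. (E m - L) * Wt \<delta> m)"
        using suminf_diff[OF sEW sLW] sumLW by (simp add: algebra_simps)
      define h where "h = (\<lambda>m. (if m < N0 then C * Wt \<delta> m else 0) + \<epsilon> / 2 * Wt \<delta> m)"
      have sh1: "(\<lambda>m. if m < N0 then C * Wt \<delta> m else 0) sums (\<Sum>m<N0. C * Wt \<delta> m)"
        using sums_If_finite_set[of "{..<N0}" "\<lambda>m. C * Wt \<delta> m"] by simp
      have sh: "h sums ((\<Sum>m<N0. C * Wt \<delta> m) + \<epsilon> / 2 * 1)"
        unfolding h_def by (intro sums_add sh1 sums_mult Wt_sums d)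
      have hb: "norm ((E m - L) * Wt \<delta> m) \<le> h m" for m
      proof -
        have nr: "norm ((E m - L) * Wt \<delta> m) = \<bar>E m - L\<bar> * Wt \<delta> m"
          using W0[of m] by (simp add: abs_mult)
        have b: "0 \<le> \<epsilon> / 2 * Wt \<delta> m" using e W0[of m] by simp
        show ?thesis
        proof (cases "m < N0")
          case True
          have a: "\<bar>E m - L\<bar> * Wt \<delta> m \<le> C * Wt \<delta> m" by (rule mult_right_mono[OF C W0])
          have "h m = C * Wt \<delta> m + \<epsilon> / 2 * Wt \<delta> m" using True by (simp add: h_def)
          then show ?thesis using nr a b by linarith
        next
          case False
          then have "\<bar>E m - L\<bar> \<le> \<epsilon> / 2" using N0[of m] by simp
          then have a: "\<bar>E m - L\<bar> * Wt \<delta> m \<le> \<epsilon> / 2 * Wt \<delta> m" by (rule mult_right_mono[OF _ W0])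
          have "h m = \<epsilon> / 2 * Wt \<delta> m" using False by (simp add: h_def)
          then show ?thesis using nr a by linarith
        qed
      qed
      have sabs: "summable (\<lambda>m. norm ((E m - L) * Wt \<delta> m))"
      proof (rule summable_comparison_test')
        show "summable h" using sh by (rule sums_summable)
        fix m :: nat
        show "norm (norm ((E m - L) * Wt \<delta> m)) \<le> h m" using hb[of m] by simp
      qed
      have "\<bar>suminf (\<lambda>m. (E m - L) * Wt \<delta> m)\<bar> \<le> suminf (\<lambda>m. norm ((E m - L) * Wt \<delta> m))"
        using summable_norm[OF sabs] by simp
      also have "\<dots> \<le> suminf h"
      proof (rule suminf_le)
        show "summable h" using sh by (rule sums_summable)
        show "summable (\<lambda>m. norm ((E m - L) * Wt \<delta> m))" by (rule sabs)
        show "\<And>m. norm ((E m - L) * Wt \<delta> m) \<le> h m" by (rule hb)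
      qed
      also have "\<dots> = C * (1 - real (Suc N0) powr (-\<delta>)) + \<epsilon> / 2"
        using sums_unique[OF sh] Wt_partial[where N=N0 and \<delta>=\<delta>] by (simp add: sum_distrib_left[symmetric])
      also have "\<dots> < \<epsilon>" using elim by simp
      finally show ?case using eq by (simp add: dist_real_def)
    qed
  qed
qed

definition Dq :: "nat \<Rightarrow> real" where "Dq n = Pm n - Bq n"

lemma Dq_sum: "Dq n = (\<Sum>d\<in>{..n}. ap d - bq d)"
  unfolding Dq_def Pm_def Bq_def by (simp add: sum_subtractf)

definition Lq :: real where "Lq = c1v - (euler_mascheroni - ln (ln 2))"

lemma Dq_lim: "Dq \<longlonglongrightarrow> Lq"
proof -
  have "(\<lambda>n. (Pm n - ln (ln (real n))) - (Bq n - ln (ln (real n)))) \<longlonglongrightarrow> c1v - (euler_mascheroni - ln (ln 2))"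
    by (intro tendsto_diff Pm_lim Bq_lim)
  then show ?thesis unfolding Dq_def Lq_def by simp
qed

lemma bq_pow2_lower:
  assumes d: "\<delta> > 0" and N: "N \<ge> 2^K0"
  shows "(\<Sum>d\<in>{..N}. bq d * real d powr (-\<delta>)) \<ge> (\<Sum>k\<in>{1..K0}. (2 powr (-\<delta>))^k / real k)"
proof -
  have bq0: "bq d * real d powr (-\<delta>) \<ge> 0" for d unfolding bq_def by simp
  have inj: "inj_on (\<lambda>k::nat. (2::nat)^k) {1..K0}" by (auto simp: inj_on_def)
  have "(\<Sum>k\<in>{1..K0}. (2 powr (-\<delta>))^k / real k) = (\<Sum>k\<in>{1..K0}. bq (2^k) * real ((2::nat)^k) powr (-\<delta>))"
  proof (rule sum.cong)
    fix k assume k: "k \<in> {1..K0}"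
    have "bq (2^k) = 1 / real k" using k unfolding bq_def by auto
    moreover have "real ((2::nat)^k) powr (-\<delta>) = (2 powr (-\<delta>))^k"
    proof -
      have "real ((2::nat)^k) = (2::real) powr (real k)" by (simp add: powr_realpow)
      then have "real ((2::nat)^k) powr (-\<delta>) = 2 powr (real k * (-\<delta>))" by (simp add: powr_powr)
      also have "\<dots> = (2 powr (-\<delta>))^k" by (simp add: powr_power)
      finally show ?thesis .
    qed
    ultimately show "(2 powr (-\<delta>))^k / real k = bq (2^k) * real ((2::nat)^k) powr (-\<delta>)" by simp
  qed simp
  also have "\<dots> = (\<Sum>d\<in>(\<lambda>k. 2^k) ` {1..K0}. bq d * real d powr (-\<delta>))"
    using sum.reindex[OF inj, of "\<lambda>d. bq d * real d powr (-\<delta>)"] by (simp add: comp_def)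
  also have "\<dots> \<le> (\<Sum>d\<in>{..N}. bq d * real d powr (-\<delta>))"
  proof (rule sum_mono2)
    show "(\<lambda>k. 2^k) ` {1..K0} \<subseteq> {..N}"
    proof
      fix d assume "d \<in> (\<lambda>k. (2::nat)^k) ` {1..K0}"
      then obtain k where k: "k \<le> K0" "d = 2^k" by auto
      have "(2::nat)^k \<le> 2^K0" using k by (intro power_increasing) auto
      then have "(2::nat)^k \<le> N" using N by (rule le_trans)
      then show "d \<in> {..N}" using k by simp
    qed
  qed (auto simp: bq0)
  finally show ?thesis .
qed

lemma log_series_partial:
  fixes y :: real
  assumes "0 \<le> y" "y < 1"
  shows "(\<lambda>K. \<Sum>k\<in>{1..K}. y^k / real k) \<longlonglongrightarrow> - ln (1 - y)"
proof -
  have "\<bar>-y\<bar> < 1" using assms by simp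
  from ln_series'[OF this] have "(\<lambda>n. - (y^n) / real n) sums ln (1 - y)" by simp
  then have "(\<lambda>n. - (- (y^n) / real n)) sums (- ln (1 - y))" by (rule sums_minus)
  then have "(\<lambda>n. \<Sum>k<n. y^k / real k) \<longlonglongrightarrow> - ln (1 - y)" by (simp add: sums_def)
  then have "(\<lambda>K. \<Sum>k<Suc K. y^k / real k) \<longlonglongrightarrow> - ln (1 - y)" by (rule LIMSEQ_Suc)
  moreover have "(\<Sum>k<Suc K. y^k / real k) = (\<Sum>k\<in>{1..K}. y^k / real k)" for K
  proof -
    have "{..<Suc K} = insert 0 {1..K}" by auto
    then show ?thesis by simp
  qed
  ultimately show ?thesis by simp
qed

lemma dir_ineq:
  assumes d: "\<delta> > 0"
  shows "suminf (\<lambda>m. Dq (Suc m) * Wt \<delta> m) \<le> ln (1 + 1/\<delta>) - (\<Sum>p\<in>S0. hp p (1+\<delta>)) + ln (1 - 2 powr (-\<delta>))"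
proof -
  define y where "y = (2::real) powr (-\<delta>)"
  have y: "0 < y" "y < 1" unfolding y_def using d by (auto simp: powr_less_one)
  define U where "U = ln (1 + 1/\<delta>) - (\<Sum>p\<in>S0. hp p (1+\<delta>))"
  obtain M where M: "M > 0" "\<And>n. \<bar>Dq n\<bar> \<le> M"
    using convergent_imp_Bseq[OF convergentI[OF Dq_lim]] by (auto elim!: BseqE)
  have W0: "\<And>m. Wt \<delta> m \<ge> 0" using Wt_nonneg[OF d] .
  have sW: "summable (Wt \<delta>)" using Wt_sums[OF d] by (rule sums_summable)
  have sDW: "summable (\<lambda>m. Dq (Suc m) * Wt \<delta> m)"
  proof (rule summable_comparison_test')
    show "summable (\<lambda>m. M * Wt \<delta> m)" using sW by (rule summable_mult)
    fix m :: nat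
    show "norm (Dq (Suc m) * Wt \<delta> m) \<le> M * Wt \<delta> m"
      using M(2)[of "Suc m"] W0[of m] by (simp add: abs_mult mult_right_mono)
  qed
  have c0: "ap 0 - bq 0 = 0" by (simp add: ap_def bq_def)
  have partial: "(\<Sum>m<N. Dq (Suc m) * Wt \<delta> m) \<le> U - (\<Sum>k\<in>{1..K0}. y^k / real k) - Dq N * real (Suc N) powr (-\<delta>)"
    if N: "N \<ge> 23" "N \<ge> 2^K0" for N K0
  proof -
    have "(\<Sum>m<N. Dq (Suc m) * Wt \<delta> m) = (\<Sum>d\<in>{..N}. (ap d - bq d) * (real d powr (-\<delta>) - real (Suc N) powr (-\<delta>)))"
      unfolding Wt_def Dq_sum using abel_pow[of "\<lambda>d. ap d - bq d", OF c0] by simp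
    also have "\<dots> = (\<Sum>d\<in>{..N}. ap d * real d powr (-\<delta>)) - (\<Sum>d\<in>{..N}. bq d * real d powr (-\<delta>)) - Dq N * real (Suc N) powr (-\<delta>)"
    proof -
      have e: "\<And>d. (ap d - bq d) * (real d powr (-\<delta>) - real (Suc N) powr (-\<delta>)) =
         ap d * real d powr (-\<delta>) - bq d * real d powr (-\<delta>) - (ap d - bq d) * real (Suc N) powr (-\<delta>)"
        by (simp add: algebra_simps)
      show ?thesis unfolding e sum_subtractf sum_distrib_right[symmetric] Dq_sum by simp
    qed
    also have "\<dots> \<le> U - (\<Sum>k\<in>{1..K0}. y^k / real k) - Dq N * real (Suc N) powr (-\<delta>)"
      using prime_dirichlet_bound[OF d N(1)] bq_pow2_lower[OF d N(2)] unfolding U_def y_def by simp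
    finally show ?thesis .
  qed
  have bound: "suminf (\<lambda>m. Dq (Suc m) * Wt \<delta> m) \<le> U - (\<Sum>k\<in>{1..K0}. y^k / real k)" for K0
  proof -
    have l1: "(\<lambda>N. \<Sum>m<N. Dq (Suc m) * Wt \<delta> m) \<longlonglongrightarrow> suminf (\<lambda>m. Dq (Suc m) * Wt \<delta> m)"
      by (rule summable_LIMSEQ[OF sDW])
    have l2: "(\<lambda>N. U - (\<Sum>k\<in>{1..K0}. y^k / real k) - Dq N * real (Suc N) powr (-\<delta>)) \<longlonglongrightarrow> U - (\<Sum>k\<in>{1..K0}. y^k / real k) - Lq * 0"
      by (intro tendsto_intros Dq_lim powr_Suc_lim d)
    have l2': "(\<lambda>N. U - (\<Sum>k\<in>{1..K0}. y^k / real k) - Dq N * real (Suc N) powr (-\<delta>)) \<longlonglongrightarrow> U - (\<Sum>k\<in>{1..K0}. y^k / real k)"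
      using l2 by simp
    show ?thesis
    proof (rule LIMSEQ_le[OF l1 l2'])
      show "\<exists>N. \<forall>n\<ge>N. (\<Sum>m<n. Dq (Suc m) * Wt \<delta> m) \<le> U - (\<Sum>k\<in>{1..K0}. y^k / real k) - Dq n * real (Suc n) powr (-\<delta>)"
        using partial by (intro exI[of _ "max 23 (2^K0)"]) auto
    qed
  qed
  have "suminf (\<lambda>m. Dq (Suc m) * Wt \<delta> m) \<le> U - (- ln (1 - y))"
  proof (rule LIMSEQ_le_const)
    show "(\<lambda>K. U - (\<Sum>k\<in>{1..K}. y^k / real k)) \<longlonglongrightarrow> U - (- ln (1 - y))"
      using y by (intro tendsto_intros log_series_partial) auto
    show "\<exists>N. \<forall>n\<ge>N. suminf (\<lambda>m. Dq (Suc m) * Wt \<delta> m) \<le> U - (\<Sum>k\<in>{1..n}. y^k / real k)"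
      using bound by auto
  qed
  then show ?thesis unfolding U_def y_def by simp
qed

lemma hp_cont:
  assumes p: "p \<in> S0"
  shows "((\<lambda>\<delta>::real. hp p (1+\<delta>)) \<longlongrightarrow> hp p 1) (at_right 0)"
proof -
  have p2: "real p \<ge> 2" using S0_primes[OF p] prime_ge_2_nat by auto
  have l: "((\<lambda>\<delta>::real. real p powr (-(1+\<delta>))) \<longlongrightarrow> real p powr (-(1+0))) (at_right 0)"
    using p2 by (intro tendsto_intros) auto
  have v: "real p powr (-1) = 1 / real p" using p2 by (simp add: powr_neg_one)
  have lt: "real p powr (-1) < 1" using p2 v by simp
  have "((\<lambda>\<delta>::real. - ln (1 - real p powr (-(1+\<delta>))) - real p powr (-(1+\<delta>))) \<longlongrightarrow>
          - ln (1 - real p powr (-(1+0))) - real p powr (-(1+0))) (at_right 0)"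
    using l lt p2 by (intro tendsto_intros) auto
  then show ?thesis unfolding hp_def by simp
qed

lemma c1v_bound: "c1v \<le> euler_mascheroni - (\<Sum>p\<in>S0. hp p 1)"
proof -
  have A: "((\<lambda>\<delta>. suminf (\<lambda>m. Dq (Suc m) * Wt \<delta> m)) \<longlongrightarrow> Lq) (at_right 0)"
    using abelian[OF LIMSEQ_Suc[OF Dq_lim]] by simp
  have R1: "((\<lambda>\<delta>::real. ln (1 + 1/\<delta>) + ln (1 - 2 powr (-\<delta>))) \<longlongrightarrow> ln (ln 2)) (at_right 0)"
    by real_asymp
  have R2: "((\<lambda>\<delta>::real. \<Sum>p\<in>S0. hp p (1+\<delta>)) \<longlongrightarrow> (\<Sum>p\<in>S0. hp p 1)) (at_right 0)"
    by (intro tendsto_sum hp_cont)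
  have B: "((\<lambda>\<delta>::real. ln (1 + 1/\<delta>) - (\<Sum>p\<in>S0. hp p (1+\<delta>)) + ln (1 - 2 powr (-\<delta>))) \<longlongrightarrow> ln (ln 2) - (\<Sum>p\<in>S0. hp p 1)) (at_right 0)"
    using tendsto_diff[OF R1 R2] by (simp add: algebra_simps)
  have ev: "eventually (\<lambda>\<delta>::real. suminf (\<lambda>m. Dq (Suc m) * Wt \<delta> m) \<le> ln (1 + 1/\<delta>) - (\<Sum>p\<in>S0. hp p (1+\<delta>)) + ln (1 - 2 powr (-\<delta>))) (at_right 0)"
    using eventually_at_right_less[of "0::real"] by eventually_elim (rule dir_ineq)
  have "Lq \<le> ln (ln 2) - (\<Sum>p\<in>S0. hp p 1)"
    by (rule tendsto_le[OF trivial_limit_at_right_real B A ev])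
  then show ?thesis unfolding Lq_def by simp
qed

abbreviation PS where "PS \<equiv> {p::nat. prime p}"

lemma PS_inf: "infinite PS" using primes_infinite by simp

lemma pr_prime: "prime (pr l)"
  unfolding pr_def using enumerate_in_set[OF PS_inf] by simp

lemma pr_mono: "l \<ge> 1 \<Longrightarrow> pr l < pr (Suc l)"
  unfolding pr_def using enumerate_mono_iff[OF PS_inf] by simp

lemma enum0: "enumerate PS 0 = 2"
proof -
  have "(LEAST n. n \<in> PS) = 2"
    by (rule Least_equality) (auto simp: prime_ge_2_nat)
  then show ?thesis by (simp add: enumerate_0)
qed

lemma pr1: "pr 1 = 2" unfolding pr_def using enum0 by simp

lemma enum1: "enumerate (PS - {2}) 0 = 3"
proof -
  have "(LEAST n. n \<in> PS - {2}) = 3"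
  proof (rule Least_equality)
    show "3 \<in> PS - {2}" by simp
    fix y assume "y \<in> PS - {2}"
    then have "prime y" "y \<noteq> 2" by auto
    then show "3 \<le> y" using prime_ge_2_nat[of y] by linarith
  qed
  then show ?thesis by (simp add: enumerate_0)
qed

lemma pr2: "pr 2 = 3"
proof -
  have "pr 2 = enumerate PS (Suc 0)" unfolding pr_def by simp
  also have "\<dots> = enumerate (PS - {2}) 0" by (simp add: enumerate_Suc' enum0)
  finally show ?thesis using enum1 by simp
qed

lemma pr3: "pr 3 = 5"
proof -
  have np4: "\<not> prime (4::nat)" by code_simp
  have "pr 3 = enumerate PS (Suc (Suc 0))" unfolding pr_def by (simp add: numeral_2_eq_2)
  also have "\<dots> = enumerate (PS - {2}) (Suc 0)" by (simp only: enumerate_Suc' enum0)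
  also have "\<dots> = enumerate (PS - {2} - {3}) 0" by (simp only: enumerate_Suc' enum1)
  also have "\<dots> = 5"
  proof -
    have "(LEAST n. n \<in> PS - {2} - {3}) = 5"
    proof (rule Least_equality)
      show "5 \<in> PS - {2} - {3}" by simp
      fix y assume "y \<in> PS - {2} - {3}"
      then have "prime y" "y \<noteq> 2" "y \<noteq> 3" by auto
      moreover have "y \<noteq> 4" using np4 \<open>prime y\<close> by auto
      ultimately show "5 \<le> y" using prime_ge_2_nat[of y] by linarith
    qed
    then show ?thesis by (simp add: enumerate_0)
  qed
  finally show ?thesis .
qed

lemma pr_lower: "l \<ge> 2 \<Longrightarrow> 2 * l - 1 \<le> pr l"
proof (induction l rule: dec_induct)
  case base then show ?case using pr2 by simp
next
  case (step n)
  have a: "pr n < pr (Suc n)" using step pr_mono by simp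
  have "pr n \<ge> 3" using step by simp
  then have o1: "odd (pr n)" using prime_odd_nat[OF pr_prime] by simp
  have o2: "odd (pr (Suc n))" using prime_odd_nat[OF pr_prime] a \<open>pr n \<ge> 3\<close> by simp
  have "pr n + 2 \<le> pr (Suc n)" using a o1 o2 by presburger
  then show ?case using step by simp
qed

definition ql :: "nat \<Rightarrow> nat" where "ql l = (if l = 1 then 2 else 2 * l - 1)"

lemma ql_le_pr: "l \<ge> 1 \<Longrightarrow> ql l \<le> pr l"
  unfolding ql_def using pr1 pr_lower by (cases "l = 1") auto

definition fB :: "real \<Rightarrow> real" where "fB x = x^2 / (x^2 - 1)"

lemma fB_alt: "x > 1 \<Longrightarrow> fB x = 1 + 1 / (x^2 - 1)"
proof -
  assume x: "x > 1"
  have "x^2 > 1" using x by (simp add: one_less_power)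
  then have h: "x^2 - 1 \<noteq> 0" by simp
  have "fB x = ((x^2 - 1) + 1) / (x^2 - 1)" by (simp add: fB_def)
  also have "\<dots> = (x^2 - 1) / (x^2 - 1) + 1 / (x^2 - 1)" by (rule add_divide_distrib)
  also have "(x^2 - 1) / (x^2 - 1) = 1" using h by simp
  finally show ?thesis by simp
qed

lemma fB_ge1: "x > 1 \<Longrightarrow> fB x \<ge> 1"
  using fB_alt[of x] by (simp add: power_less_one_iff)

lemma fB_anti: "1 < x \<Longrightarrow> x \<le> y \<Longrightarrow> fB y \<le> fB x"
proof -
  assume xy: "1 < x" "x \<le> y"
  have "x^2 \<le> y^2" using xy by (intro power_mono) auto
  moreover have "x^2 > 1" using xy by simp
  ultimately have "1 / (y^2 - 1) \<le> 1 / (x^2 - 1)" by (intro divide_left_mono) auto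
  then show ?thesis using fB_alt[of x] fB_alt[of y] xy by simp
qed

lemma ql_gt1: "l \<ge> 1 \<Longrightarrow> real (ql l) > 1"
  unfolding ql_def by auto

lemma tail_prod:
  "(\<Prod>l\<in>{11..n}. fB (real (2 * l - 1))) \<le> exp (1/40)"
proof -
  have "(\<Prod>l\<in>{11..n}. fB (real (2 * l - 1))) \<le> (\<Prod>l\<in>{11..n}. exp ((1 / real (l - 1) - 1 / real l) / 4))"
  proof (rule prod_mono)
    fix l assume l: "l \<in> {11..n}"
    then have l11: "l \<ge> 11" by simp
    have r: "real (2 * l - 1) = 2 * real l - 1" using l11 by (simp add: of_nat_diff)
    have gt: "real (2 * l - 1) > 1" using l11 r by simp
    have "fB (real (2 * l - 1)) = 1 + 1 / ((2 * real l - 1)^2 - 1)" using fB_alt[OF gt] r by simp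
    also have "(2 * real l - 1)^2 - 1 = 4 * real l * (real l - 1)" by (simp add: power2_eq_square algebra_simps)
    also have "1 / (4 * real l * (real l - 1)) = (1 / real (l - 1) - 1 / real l) / 4"
      using l11 by (simp add: of_nat_diff field_simps)
    finally have "fB (real (2 * l - 1)) = 1 + (1 / real (l - 1) - 1 / real l) / 4" .
    also have "\<dots> \<le> exp ((1 / real (l - 1) - 1 / real l) / 4)" by (rule exp_ge_add_one_self[simplified add.commute])
    finally show "0 \<le> fB (real (2 * l - 1)) \<and> fB (real (2 * l - 1)) \<le> exp ((1 / real (l - 1) - 1 / real l) / 4)"
      using fB_ge1[OF gt] by simp
  qed
  also have "\<dots> = exp (\<Sum>l\<in>{11..n}. (1 / real (l - 1) - 1 / real l) / 4)" by (simp add: exp_sum)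
  also have "\<dots> \<le> exp (1/40)"
  proof (cases "n \<ge> 10")
    case True
    define F where "F = (\<lambda>k::nat. - 1 / real k)"
    have "(\<Sum>l\<in>{11..n}. (1 / real (l - 1) - 1 / real l) / 4) = (\<Sum>l\<in>{Suc 10..n}. F l - F (l - 1)) / 4"
      by (simp add: F_def sum_divide_distrib)
    also have "\<dots> = (F n - F 10) / 4" using sum_telescope''[OF True, of F] by simp
    also have "\<dots> \<le> 1/40" using True by (simp add: F_def)
    finally show ?thesis by simp
  next
    case False
    then have "{11..n} = {}" by auto
    then show ?thesis by simp
  qed
  finally show ?thesis .
qed

definition Rall :: real where "Rall = (\<Prod>l\<in>{1..10}. fB (real (ql l)))"

lemma Bk_bound:
  assumes j: "j \<in> {1,2,3}"
  shows "Bk j k \<le> Rall / fB (real (ql j)) * exp (1/40)" "Bk j k \<ge> 0"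
proof -
  define n where "n = max (k+1) 10"
  have fq1: "fB (real (ql l)) \<ge> 1" if "l \<ge> 1" for l using fB_ge1[OF ql_gt1[OF that]] .
  have Bk_fB: "Bk j k = (\<Prod>l\<in>{1..k+1} - {j}. fB (real (pr l)))"
    unfolding Bk_def fB_def by simp
  have "Bk j k \<le> (\<Prod>l\<in>{1..k+1} - {j}. fB (real (ql l)))"
    unfolding Bk_fB
  proof (rule prod_mono)
    fix l assume l: "l \<in> {1..k+1} - {j}"
    then have l1: "l \<ge> 1" by simp
    have "real (ql l) \<le> real (pr l)" using ql_le_pr[OF l1] by simp
    then have "fB (real (pr l)) \<le> fB (real (ql l))" by (rule fB_anti[OF ql_gt1[OF l1]])
    moreover have "fB (real (pr l)) \<ge> 1"
      using ql_gt1[OF l1] \<open>real (ql l) \<le> real (pr l)\<close> by (intro fB_ge1) simp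
    ultimately show "0 \<le> fB (real (pr l)) \<and> fB (real (pr l)) \<le> fB (real (ql l))"
      by simp
  qed
  also have "\<dots> \<le> (\<Prod>l\<in>{1..n} - {j}. fB (real (ql l)))"
  proof -
    have sub: "{1..k+1} - {j} \<subseteq> {1..n} - {j}" unfolding n_def by auto
    have "(\<Prod>l\<in>{1..n} - {j}. fB (real (ql l))) =
          (\<Prod>l\<in>({1..n} - {j}) - ({1..k+1} - {j}). fB (real (ql l))) * (\<Prod>l\<in>{1..k+1} - {j}. fB (real (ql l)))"
      by (rule prod.subset_diff[OF sub]) simp
    moreover have A1: "(\<Prod>l\<in>({1..n} - {j}) - ({1..k+1} - {j}). fB (real (ql l))) \<ge> 1"
      by (rule prod_ge_1) (use fq1 in auto)
    moreover have B0: "(\<Prod>l\<in>{1..k+1} - {j}. fB (real (ql l))) \<ge> 0"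
      by (rule prod_nonneg) (use fq1 in force)
    ultimately show ?thesis
      using mult_right_mono[OF A1 B0] by simp
  qed
  also have "\<dots> = (\<Prod>l\<in>{1..10} - {j}. fB (real (ql l))) * (\<Prod>l\<in>{11..n}. fB (real (ql l)))"
  proof -
    have "{1..n} - {j} = ({1..10} - {j}) \<union> {11..n}" using j unfolding n_def by auto
    moreover have "(\<Prod>l\<in>({1..10} - {j}) \<union> {11..n}. fB (real (ql l))) =
       (\<Prod>l\<in>{1..10} - {j}. fB (real (ql l))) * (\<Prod>l\<in>{11..n}. fB (real (ql l)))"
      by (rule prod.union_disjoint) auto
    ultimately show ?thesis by simp
  qed
  also have "(\<Prod>l\<in>{11..n}. fB (real (ql l))) = (\<Prod>l\<in>{11..n}. fB (real (2 * l - 1)))"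
    by (rule prod.cong) (auto simp: ql_def)
  also have "(\<Prod>l\<in>{1..10} - {j}. fB (real (ql l))) = Rall / fB (real (ql j))"
    unfolding Rall_def using j fq1[of j] by (subst prod_diff1) auto
  finally have "Bk j k \<le> Rall / fB (real (ql j)) * (\<Prod>l\<in>{11..n}. fB (real (2 * l - 1)))" .
  moreover have "Rall / fB (real (ql j)) \<ge> 0"
  proof -
    have j1: "j \<ge> 1" using j by auto
    have "fB (real (ql j)) \<ge> 0" using fq1[OF j1] by simp
    moreover have "Rall \<ge> 0" unfolding Rall_def by (rule prod_nonneg) (use fq1 in force)
    ultimately show ?thesis by simp
  qed
  ultimately show "Bk j k \<le> Rall / fB (real (ql j)) * exp (1/40)"
    using tail_prod[of n] by (meson mult_left_mono order_trans)
  show "Bk j k \<ge> 0" unfolding Bk_fB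
  proof (rule prod_nonneg)
    fix l assume l: "l \<in> {1..k+1} - {j}"
    then have l1: "l \<ge> 1" by simp
    have "real (pr l) > 1" using ql_gt1[OF l1] ql_le_pr[OF l1] by linarith
    then show "0 \<le> fB (real (pr l))" using fB_ge1 by fastforce
  qed
qed

lemma Rall_val: "Rall = 10667118605 / 6442450944"
  unfolding Rall_def by (simp add: numeral_eq_Suc atLeastAtMostSuc_conv ql_def fB_def)

lemma S0_explicit: "S0 = {2,3,5,7,11,13,17,19,23}" by (simp add: S0_def)

lemma sigma_val: "(\<Prod>p\<in>S0. 1 - 1 / real p) = 110592 / 676039"
  unfolding S0_explicit by simp

lemma s_val: "(\<Sum>p\<in>S0. 1 / real p) = 334406399 / 223092870"
  unfolding S0_explicit by simp

lemma finS0: "finite S0" unfolding S0_def by simp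

lemma exp_neg_hp: "exp (- (\<Sum>p\<in>S0. hp p 1)) = (\<Prod>p\<in>S0. 1 - 1 / real p) * exp (\<Sum>p\<in>S0. 1 / real p)"
proof -
  have pos: "p \<in> S0 \<Longrightarrow> real p \<ge> 2" for p using S0_primes prime_ge_2_nat by fastforce
  have "- (\<Sum>p\<in>S0. hp p 1) = (\<Sum>p\<in>S0. ln (1 - 1 / real p) + 1 / real p)"
    unfolding sum_negf[symmetric]
  proof (rule sum.cong)
    fix p assume "p \<in> S0"
    then have "real p \<ge> 2" by (rule pos)
    then have "real p powr (-1) = 1 / real p" by (simp add: powr_neg_one)
    then show "- hp p 1 = ln (1 - 1 / real p) + 1 / real p" unfolding hp_def by simp
  qed simp
  then have "exp (- (\<Sum>p\<in>S0. hp p 1)) = (\<Prod>p\<in>S0. exp (ln (1 - 1 / real p) + 1 / real p))"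
    by (simp add: exp_sum[OF finS0])
  also have "\<dots> = (\<Prod>p\<in>S0. (1 - 1 / real p) * exp (1 / real p))"
  proof (rule prod.cong)
    fix p assume "p \<in> S0"
    then have "real p \<ge> 2" by (rule pos)
    then have "1 - 1 / real p > 0" by (simp add: field_simps)
    then show "exp (ln (1 - 1 / real p) + 1 / real p) = (1 - 1 / real p) * exp (1 / real p)"
      by (simp add: exp_add)
  qed simp
  also have "\<dots> = (\<Prod>p\<in>S0. 1 - 1 / real p) * exp (\<Sum>p\<in>S0. 1 / real p)"
    by (simp add: prod.distrib exp_sum[OF finS0])
  finally show ?thesis .
qed

lemma exp_upper:
  fixes y :: real
  assumes "0 \<le> y" "y \<le> 8"
  shows "exp (1 + y) \<le> 272/100 * (1 + y/8 + (y/8)^2)^8"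
proof -
  have "exp (1 + y) = exp 1 * exp (y/8) ^ 8"
    by (simp add: exp_add exp_of_nat_mult[symmetric])
  also have "exp (y/8) ^ 8 \<le> (1 + y/8 + (y/8)^2)^8"
    using assms by (intro power_mono exp_bound) auto
  then have "exp 1 * exp (y/8) ^ 8 \<le> exp 1 * (1 + y/8 + (y/8)^2)^8" by simp
  also have "\<dots> \<le> 272/100 * (1 + y/8 + (y/8)^2)^8"
    using e_less_272 by (intro mult_right_mono) auto
  finally show ?thesis .
qed

lemma key_numeric:
  assumes j: "j \<in> {1,2,3}"
  shows "exp (mertens_c1 - 1 / real (pr j)) * (Rall / fB (real (ql j)) * exp (1/40)) \<le> 99/100 * exp euler_mascheroni"
proof -
  define pj where "pj = real (pr j)"
  define s where "s = (\<Sum>p\<in>S0. 1 / real p)"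
  define \<sigma> where "\<sigma> = (\<Prod>p\<in>S0. 1 - 1 / real p)"
  have qj: "real (ql j) = pj" using j unfolding pj_def ql_def using pr1 pr2 pr3 by auto
  have "exp (mertens_c1 - 1 / pj) \<le> exp (euler_mascheroni - (\<Sum>p\<in>S0. hp p 1) - 1 / pj)"
    using c1v_bound mertens_c1_eq by simp
  also have "\<dots> = exp euler_mascheroni * (\<sigma> * exp (s - 1 / pj))"
  proof -
    define H where "H = (\<Sum>p\<in>S0. hp p 1)"
    have e1: "euler_mascheroni - H - 1 / pj = euler_mascheroni + (- H) + (- (1 / pj))" by simp
    have e2: "s - 1 / pj = s + (- (1 / pj))" by simp
    have "exp (euler_mascheroni - H - 1 / pj) = exp euler_mascheroni * exp (- H) * exp (- (1 / pj))"
      by (simp only: e1 exp_add)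
    also have "exp (- H) = \<sigma> * exp s" unfolding H_def \<sigma>_def s_def by (rule exp_neg_hp)
    also have "exp (s - 1 / pj) = exp s * exp (- (1 / pj))" by (simp only: e2 exp_add)
    ultimately show ?thesis unfolding H_def by (simp add: mult_ac)
  qed
  finally have A: "exp (mertens_c1 - 1 / pj) \<le> exp euler_mascheroni * (\<sigma> * exp (s - 1 / pj))" .
  have Bpos: "Rall / fB pj * exp (1/40) \<ge> 0"
    unfolding Rall_val fB_def using j unfolding pj_def using pr1 pr2 pr3 by auto
  have "exp (mertens_c1 - 1 / pj) * (Rall / fB pj * exp (1/40)) \<le>
        exp euler_mascheroni * (\<sigma> * exp (s - 1 / pj)) * (Rall / fB pj * exp (1/40))"
    using A Bpos by (rule mult_right_mono)
  also have "\<dots> = exp euler_mascheroni * (\<sigma> * (Rall / fB pj) * exp (s - 1 / pj + 1/40))"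
    by (simp only: exp_add[of "s - 1 / pj" "1/40"]) (simp add: mult_ac)
  also have "\<dots> \<le> exp euler_mascheroni * (99/100)"
  proof (rule mult_left_mono)
    have s_up: "s \<le> 18737/12500" unfolding s_def s_val by simp
    have "\<sigma> * (Rall / fB pj) * exp (s - 1 / pj + 1/40) \<le> \<sigma> * (Rall / fB pj) * exp (1 + (18737/12500 - 1 / pj + 1/40 - 1))"
      using s_up j unfolding \<sigma>_def sigma_val Rall_val fB_def pj_def using pr1 pr2 pr3
      by (intro mult_left_mono) auto
    also have "\<dots> \<le> \<sigma> * (Rall / fB pj) * (272/100 * (1 + (18737/12500 - 1 / pj + 1/40 - 1)/8 + ((18737/12500 - 1 / pj + 1/40 - 1)/8)^2)^8)"
      using j unfolding \<sigma>_def sigma_val Rall_val fB_def pj_def using pr1 pr2 pr3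
      by (intro mult_left_mono exp_upper) auto
    also have "\<dots> \<le> 99/100"
      using j unfolding \<sigma>_def sigma_val Rall_val fB_def pj_def using pr1 pr2 pr3 by (auto simp: eval_nat_numeral power2_eq_square)
    finally show "\<sigma> * (Rall / fB pj) * exp (s - 1 / pj + 1/40) \<le> 99/100" .
  qed simp
  finally show ?thesis unfolding pj_def qj[unfolded pj_def] by (simp add: mult.commute)
qed

lemma two51: "(2.51::real) = 251/100" by simp

theorem mainTheorem11:
  fixes j :: nat
  assumes "j \<in> {1, 2, 3}"
  shows "\<exists>K::nat.
           (\<forall>k\<ge>K. Ck j k * Bk j k < exp euler_mascheroni * Dk j k) \<and>
           (\<forall>k\<ge>max K 99. \<forall>m::nat. m = (\<Prod>l=1..k+1. pr l) div pr j \<longrightarrow>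
                Ck j k * Bk j k < exp euler_mascheroni * ln (ln (real m)))"
proof -
  have j: "j \<in> {1,2,3}" by (rule assms)
  define U :: "real \<Rightarrow> real" where "U = (\<lambda>x. x * (ln x + ln (ln x)))"
  define V :: "real \<Rightarrow> real" where "V = (\<lambda>x. x * (ln x + ln (ln x) - 1))"
  define P :: "real \<Rightarrow> bool" where "P = (\<lambda>x.
      99/100 * ln (U x) * exp (5 / ln (V x)) < ln (V x * ln (251/100) - ln 5) \<and>
      99/100 * ln (U x) * exp (5 / ln (V x)) < ln ((x - 1) * ln 2) \<and>
      ln (U x) > 0 \<and> V x * ln (251/100) - ln 5 > 0 \<and> x \<ge> 4)"
  have e1: "eventually (\<lambda>x::real. 99/100 * ln (x * (ln x + ln (ln x))) * exp (5 / ln (x * (ln x + ln (ln x) - 1)))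
      < ln (x * (ln x + ln (ln x) - 1) * ln (251/100) - ln 5)) at_top" by real_asymp
  have e2: "eventually (\<lambda>x::real. 99/100 * ln (x * (ln x + ln (ln x))) * exp (5 / ln (x * (ln x + ln (ln x) - 1)))
      < ln ((x - 1) * ln 2)) at_top" by real_asymp
  have e3: "eventually (\<lambda>x::real. ln (x * (ln x + ln (ln x))) > 0) at_top" by real_asymp
  have e4: "eventually (\<lambda>x::real. x * (ln x + ln (ln x) - 1) * ln (251/100) - ln 5 > 0) at_top" by real_asymp
  have e5: "eventually (\<lambda>x::real. x \<ge> 4) at_top" by (rule eventually_ge_at_top)
  have evx: "eventually P at_top"
    using e1 e2 e3 e4 e5 unfolding P_def U_def V_def by eventually_elim auto
  have F: "filterlim (\<lambda>k::nat. real (Suc k)) at_top sequentially"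
    by (rule filterlim_compose[OF filterlim_real_sequentially filterlim_Suc])
  have "eventually (\<lambda>k. P (real (Suc k))) sequentially"
    by (rule eventually_compose_filterlim[OF evx F])
  then obtain K where K: "\<And>k. k \<ge> K \<Longrightarrow> P (real (Suc k))"
    unfolding eventually_sequentially by blast
  have core: "Ck j k * Bk j k \<le> exp euler_mascheroni * (99/100 * ln (U (real (Suc k))) * exp (5 / ln (V (real (Suc k)))))"
    if "P (real (Suc k))" for k
  proof -
    define x where "x = real (Suc k)"
    have Px: "P x" using that unfolding x_def .
    have lnU: "ln (U x) > 0" using Px unfolding P_def by simp
    have Ck_eq: "Ck j k = ln (U x) * exp (5 / ln (V x)) * exp (mertens_c1 - 1 / real (pr j))"
      unfolding Ck_def U_def V_def x_def by (simp add: exp_add mult_ac)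
    have "exp (mertens_c1 - 1 / real (pr j)) * Bk j k \<le> exp (mertens_c1 - 1 / real (pr j)) * (Rall / fB (real (ql j)) * exp (1/40))"
      using Bk_bound(1)[OF j, of k] by (intro mult_left_mono) auto
    also have "\<dots> \<le> 99/100 * exp euler_mascheroni" by (rule key_numeric[OF j])
    finally have kb: "exp (mertens_c1 - 1 / real (pr j)) * Bk j k \<le> 99/100 * exp euler_mascheroni" .
    have "Ck j k * Bk j k = (ln (U x) * exp (5 / ln (V x))) * (exp (mertens_c1 - 1 / real (pr j)) * Bk j k)"
      unfolding Ck_eq by (simp add: mult_ac)
    also have "\<dots> \<le> (ln (U x) * exp (5 / ln (V x))) * (99/100 * exp euler_mascheroni)"
      using kb lnU by (intro mult_left_mono) auto
    finally show ?thesis unfolding x_def by (simp add: mult_ac)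
  qed
  show ?thesis
  proof (intro exI[of _ K] conjI allI impI)
    fix k assume k: "k \<ge> K"
    define x where "x = real (Suc k)"
    have Px: "P x" using K[OF k] unfolding x_def .
    have c: "Ck j k * Bk j k \<le> exp euler_mascheroni * (99/100 * ln (U x) * exp (5 / ln (V x)))"
      using core[OF K[OF k]] unfolding x_def .
    have pj5: "ln (real (pr j)) \<le> ln 5"
      using j pr1 pr2 pr3 by auto
    have Vpos: "V x * ln (251/100) - ln 5 > 0" using Px unfolding P_def by simp
    have "ln (V x * ln (251/100) - ln 5) \<le> ln (V x * ln (251/100) - ln (real (pr j)))"
      using Vpos pj5 by (subst ln_le_cancel_iff) auto
    also have "\<dots> = Dk j k" unfolding Dk_def V_def x_def two51 by simp
    finally have D: "ln (V x * ln (251/100) - ln 5) \<le> Dk j k" .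
    have "99/100 * ln (U x) * exp (5 / ln (V x)) < ln (V x * ln (251/100) - ln 5)" using Px unfolding P_def by simp
    then have "exp euler_mascheroni * (99/100 * ln (U x) * exp (5 / ln (V x))) < exp euler_mascheroni * ln (V x * ln (251/100) - ln 5)"
      by simp
    also have "\<dots> \<le> exp euler_mascheroni * Dk j k" using D by simp
    finally have "exp euler_mascheroni * (99/100 * ln (U x) * exp (5 / ln (V x))) < exp euler_mascheroni * Dk j k" .
    then show "Ck j k * Bk j k < exp euler_mascheroni * Dk j k" by (rule le_less_trans[OF c])
  next
    fix k m assume k: "k \<ge> max K 99" and m: "m = (\<Prod>l=1..k+1. pr l) div pr j"
    then have kK: "k \<ge> K" by simp
    define x where "x = real (Suc k)"
    have Px: "P x" using K[OF kK] unfolding x_def .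
    have c: "Ck j k * Bk j k \<le> exp euler_mascheroni * (99/100 * ln (U x) * exp (5 / ln (V x)))"
      using core[OF K[OF kK]] unfolding x_def .
    have jin: "j \<in> {1..k+1}" using j k by auto
    have ppos: "pr l > 0" for l using pr_prime[of l] prime_gt_0_nat by blast
    have m_eq: "m = (\<Prod>l\<in>{1..k+1} - {j}. pr l)"
    proof -
      have "(\<Prod>l=1..k+1. pr l) = pr j * (\<Prod>l\<in>{1..k+1} - {j}. pr l)"
        by (rule prod.remove[OF _ jin]) simp
      then show ?thesis using m ppos[of j] by simp
    qed
    have rm: "real m = (\<Prod>l\<in>{1..k+1} - {j}. real (pr l))" unfolding m_eq by simp
    have lnm: "ln (real m) = (\<Sum>l\<in>{1..k+1} - {j}. ln (real (pr l)))"
      unfolding rm using ppos by (subst ln_prod) auto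
    have "(\<Sum>l\<in>{1..k+1} - {j}. ln (real (pr l))) \<ge> (\<Sum>l\<in>{1..k+1} - {j}. ln 2)"
    proof (rule sum_mono)
      fix l
      have "pr l \<ge> 2" using pr_prime[of l] prime_ge_2_nat by blast
      then show "ln 2 \<le> ln (real (pr l))" by simp
    qed
    moreover have "card ({1..k+1} - {j}) = k" using jin by simp
    ultimately have lnm2: "ln (real m) \<ge> real k * ln 2" using lnm by simp
    have k1: "real k \<ge> 1" using k by simp
    have pos2: "real k * ln 2 > 0" using k1 by simp
    have "ln ((x - 1) * ln 2) = ln (real k * ln 2)" unfolding x_def by simp
    also have "\<dots> \<le> ln (ln (real m))" using lnm2 pos2 by (subst ln_le_cancel_iff) auto
    finally have L: "ln ((x - 1) * ln 2) \<le> ln (ln (real m))" .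
    have "99/100 * ln (U x) * exp (5 / ln (V x)) < ln ((x - 1) * ln 2)" using Px unfolding P_def by simp
    then have "exp euler_mascheroni * (99/100 * ln (U x) * exp (5 / ln (V x))) < exp euler_mascheroni * ln ((x - 1) * ln 2)"
      by simp
    also have "\<dots> \<le> exp euler_mascheroni * ln (ln (real m))" using L by simp
    finally have "exp euler_mascheroni * (99/100 * ln (U x) * exp (5 / ln (V x))) < exp euler_mascheroni * ln (ln (real m))" .
    then show "Ck j k * Bk j k < exp euler_mascheroni * ln (ln (real m))" by (rule le_less_trans[OF c])
  qed
qed

end
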